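(* Assume $\kappa>0$, $\phi_*:=\inf_{r\ge0}\phi(r)>0$ and $\phi_*M>\sigma\bar\theta$. Then for every sectorial solution of system (CSF) it is not the case that all $\mathbf v_i(t)\to0$; consequently there exists $\bar{\mathbf v}\in\mathbb R^n$ with $|\bar{\mathbf v}|=\bar\theta^{1/p}$ such that every $\mathbf v_i(t)$ converges to $\bar{\mathbf v}$ exponentially fast.
   Context: Fix integers $N\ge1$, $n\ge1$, masses $m_1,\dots,m_N>0$ with $M=\sum_i m_i$, parameters $\sigma>0$, $p>0$, $\kappa\ge0$, and a communication kernel $\phi:[0,\infty)\to(0,\infty)$ that is smooth, positive and non-increasing. Write $\phi_{ij}=\phi(|\mathbf x_i-\mathbf x_j|)$, with $|\cdot|$ the Euclidean norm on $\mathbb R^n$. System (CSF) is, for $i=1,\dots,N$, $$\dot{\mathbf x}_i=\mathbf v_i,\qquad \dot{\mathbf v}_i=\sum_{j=1}^N m_j\phi_{ij}(\mathbf v_j-\mathbf v_i)+\sigma(\theta_i-|\mathbf v_i|^p)\mathbf v_i,\qquad \dot\theta_i=\kappa\sum_{j=1}^N m_j\phi_{ij}(\theta_j-\theta_i),$$ with $\mathbf x_i,\mathbf v_i\in\mathbb R^n$ and initial values $\theta_i(0)>0$; solutions are considered for $t\ge0$. Set $\bar\theta=\frac1M\sum_i m_i\theta_i(0)$; this weighted average is conserved in time. A solution is called sectorial if there exists a unit vector $\mathbf e\in\mathbb R^n$ with $\mathbf e\cdot\mathbf v_i(0)>0$ for all $i=1,\dots,N$. *)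

theory Defs
  imports "HOL-Analysis.Analysis"
begin

definition smooth_on_halfline :: "(real \<Rightarrow> real) \<Rightarrow> bool" where
  "smooth_on_halfline f \<longleftrightarrow>
     (\<exists>D :: nat \<Rightarrow> real \<Rightarrow> real. D 0 = f \<and>
        (\<forall>k t. t \<ge> 0 \<longrightarrow> (D k has_real_derivative D (Suc k) t) (at t within {0..})))"

definition comm_kernel :: "(real \<Rightarrow> real) \<Rightarrow> bool" where
  "comm_kernel \<phi> \<longleftrightarrow> smooth_on_halfline \<phi> \<and> (\<forall>r\<ge>0. \<phi> r > 0) \<and>
     (\<forall>r s. 0 \<le> r \<longrightarrow> r \<le> s \<longrightarrow> \<phi> s \<le> \<phi> r)"

text \<open>Solution of system (CSF) for t \<ge> 0. Particles are indexed by i < N,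
  positions/velocities live in the Euclidean space 'a (so n = DIM('a)).\<close>
definition CSF_solution ::
  "nat \<Rightarrow> (nat \<Rightarrow> real) \<Rightarrow> real \<Rightarrow> real \<Rightarrow> real \<Rightarrow> (real \<Rightarrow> real) \<Rightarrow>
   (nat \<Rightarrow> real \<Rightarrow> 'a::euclidean_space) \<Rightarrow> (nat \<Rightarrow> real \<Rightarrow> 'a) \<Rightarrow> (nat \<Rightarrow> real \<Rightarrow> real) \<Rightarrow> bool"
  where
  "CSF_solution N m \<sigma> p \<kappa> \<phi> x v \<theta> \<longleftrightarrow>
     (\<forall>i<N. \<forall>t\<ge>0.
        (x i has_vector_derivative v i t) (at t within {0..}) \<and>
        (v i has_vector_derivative
            ((\<Sum>j<N. (m j * \<phi> (norm (x i t - x j t))) *\<^sub>R (v j t - v i t))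
             + (\<sigma> * (\<theta> i t - norm (v i t) powr p)) *\<^sub>R v i t)) (at t within {0..}) \<and>
        (\<theta> i has_real_derivative
            (\<kappa> * (\<Sum>j<N. m j * \<phi> (norm (x i t - x j t)) * (\<theta> j t - \<theta> i t)))) (at t within {0..}))"

end

theory Submission
  imports Defs
begin


lemma der_at:
  fixes f :: "real \<Rightarrow> real"
  assumes "t > a" "(f has_real_derivative D) (at t within {a..})"
  shows "(f has_real_derivative D) (at t)"
proof -
  have "t \<in> interior {a..}" using assms by simp
  then have "at t within {a..} = at t" by (rule at_within_interior)
  then show ?thesis using assms by simp
qed

lemma mono_deriv:
  fixes f f' :: "real \<Rightarrow> real"
  assumes d: "\<And>t. t \<ge> a \<Longrightarrow> (f has_real_derivative f' t) (at t within {a..})"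
    and nn: "\<And>t. t \<ge> a \<Longrightarrow> f' t \<ge> 0" and "a \<le> s" "s \<le> t"
  shows "f s \<le> f t"
proof -
  have c: "continuous_on {a..} f"
    using d by (intro DERIV_continuous_on) auto
  have "continuous_on {s..t} f" by (rule continuous_on_subset[OF c]) (use assms(3) in auto)
  moreover have "\<exists>y. DERIV f x :> y \<and> y \<ge> 0" if "s < x" "x < t" for x
  proof -
    have "x > a" using that assms(3) by linarith
    then show ?thesis using der_at[OF _ d[of x]] nn[of x] by auto
  qed
  ultimately show ?thesis using DERIV_nonneg_imp_increasing_open[of s t f] assms by blast
qed

lemma gronwall_exp:
  fixes f f' :: "real \<Rightarrow> real"
  assumes d: "\<And>t. t \<ge> a \<Longrightarrow> (f has_real_derivative f' t) (at t within {a..})"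
    and ineq: "\<And>t. t \<ge> a \<Longrightarrow> f' t \<le> - \<alpha> * f t + K * exp (- \<mu> * t)"
    and al: "\<alpha> > 0" and mu: "\<mu> > 0" and K: "K \<ge> 0" and a: "a \<ge> 0"
  shows "\<exists>C \<nu>. C \<ge> 0 \<and> \<nu> > 0 \<and> (\<forall>t\<ge>a. f t \<le> C * exp (- \<nu> * t))"
proof -
  define \<nu> where "\<nu> = min \<alpha> \<mu> / 2"
  have nu: "\<nu> > 0" "\<nu> < \<alpha>" "\<nu> \<le> \<mu>" using al mu by (auto simp: \<nu>_def)
  define B where "B = K / (\<alpha> - \<nu>)"
  have B: "B \<ge> 0" "(\<alpha> - \<nu>) * B = K" using nu K by (auto simp: B_def)
  define g where "g t = (f t - B * exp (- \<nu> * t)) * exp (\<alpha> * t)" for t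
  define g' where "g' t = (f' t + \<nu> * B * exp (- \<nu> * t)) * exp (\<alpha> * t) + (f t - B * exp (- \<nu> * t)) * (\<alpha> * exp (\<alpha> * t))" for t
  have dg: "((\<lambda>t. - g t) has_real_derivative - g' t) (at t within {a..})" if "t \<ge> a" for t
    unfolding g_def g'_def
    by (rule derivative_eq_intros refl d[OF that] | simp)+
  have g'neg: "- g' t \<ge> 0" if "t \<ge> a" for t
  proof -
    have "g' t = exp (\<alpha> * t) * (f' t + \<alpha> * f t - (\<alpha> - \<nu>) * B * exp (- \<nu> * t))"
      by (simp add: g'_def algebra_simps)
    also have "\<dots> \<le> exp (\<alpha> * t) * (K * exp (- \<mu> * t) - K * exp (- \<nu> * t))"
      using ineq[OF that] B by (intro mult_left_mono) auto
    also have "\<dots> \<le> 0"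
    proof -
      have "exp (- \<mu> * t) \<le> exp (- \<nu> * t)" using nu that a by (auto intro: mult_right_mono)
      then show ?thesis using K by (simp add: mult_le_0_iff mult_left_mono)
    qed
    finally show ?thesis by simp
  qed
  define C where "C = B + \<bar>f a - B * exp (- \<nu> * a)\<bar> * exp (\<alpha> * a)"
  have "f t \<le> C * exp (- \<nu> * t)" if t: "t \<ge> a" for t
  proof -
    have "- g a \<le> - g t" by (rule mono_deriv[OF dg g'neg]) (use t in auto)
    then have "(f t - B * exp (- \<nu> * t)) * exp (\<alpha> * t) \<le> (f a - B * exp (- \<nu> * a)) * exp (\<alpha> * a)"
      by (simp add: g_def)
    then have "f t - B * exp (- \<nu> * t) \<le> (f a - B * exp (- \<nu> * a)) * exp (\<alpha> * a) * exp (- \<alpha> * t)"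
      by (simp add: exp_minus field_simps)
    also have "\<dots> \<le> \<bar>f a - B * exp (- \<nu> * a)\<bar> * exp (\<alpha> * a) * exp (- \<alpha> * t)"
      by (intro mult_right_mono) auto
    also have "\<dots> \<le> \<bar>f a - B * exp (- \<nu> * a)\<bar> * exp (\<alpha> * a) * exp (- \<nu> * t)"
      using nu t a by (intro mult_left_mono) (auto intro: mult_right_mono)
    finally show ?thesis by (simp add: C_def algebra_simps)
  qed
  moreover have "C \<ge> 0" using B by (simp add: C_def)
  ultimately show ?thesis using nu by blast
qed

lemma left_limit_nonneg:
  fixes g :: "real \<Rightarrow> real"
  assumes c: "continuous_on {a..} g" and t0: "a < t0" and pos: "\<And>s. a \<le> s \<Longrightarrow> s < t0 \<Longrightarrow> g s > 0"
  shows "g t0 \<ge> 0"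
proof (rule ccontr)
  assume "\<not> g t0 \<ge> 0"
  then have neg: "g t0 < 0" by simp
  from c t0 obtain d where d: "d > 0" "\<forall>x'\<in>{a..}. dist x' t0 < d \<longrightarrow> dist (g x') (g t0) < - g t0"
    unfolding continuous_on_iff using neg by (metis atLeast_iff less_imp_le neg_0_less_iff_less)
  define s where "s = max a (t0 - d/2)"
  have s: "a \<le> s" "s < t0" "dist s t0 < d" using d t0 by (auto simp: s_def dist_real_def)
  then have "dist (g s) (g t0) < - g t0" using d by auto
  then have "g s < 0" by (simp add: dist_real_def)
  with pos[OF s(1,2)] show False by simp
qed

lemma barrier:
  fixes g g' :: "nat \<Rightarrow> real \<Rightarrow> real"
  assumes d: "\<And>i t. i < N \<Longrightarrow> t \<ge> a \<Longrightarrow> (g i has_real_derivative g' i t) (at t within {a..})"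
    and init: "\<And>i. i < N \<Longrightarrow> g i a > 0"
    and step: "\<And>i t. i < N \<Longrightarrow> t > a \<Longrightarrow> g i t = 0 \<Longrightarrow>
                 (\<And>j s. j < N \<Longrightarrow> a \<le> s \<Longrightarrow> s \<le> t \<Longrightarrow> g j s \<ge> 0) \<Longrightarrow> g' i t > 0"
    and i: "i < N" and t: "t \<ge> a"
  shows "g i t > 0"
proof (rule ccontr)
  assume "\<not> g i t > 0"
  then have bad: "g i t \<le> 0" by simp
  have cont: "continuous_on {a..} (g j)" if "j < N" for j
    using d[OF that] by (intro DERIV_continuous_on) auto
  define S where "S = (\<Union>j\<in>{..<N}. {a..t} \<inter> g j -` {..0})"
  have Sdef: "s \<in> S \<longleftrightarrow> a \<le> s \<and> s \<le> t \<and> (\<exists>j<N. g j s \<le> 0)" for s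
    by (auto simp: S_def)
  have "closed S" unfolding S_def
  proof (intro closed_UN ballI)
    fix j assume "j \<in> {..<N}"
    then have "continuous_on {a..t} (g j)" using cont by (meson continuous_on_subset atLeastAtMost_iff atLeast_iff lessThan_iff subsetI)
    then show "closed ({a..t} \<inter> g j -` {..0})"
      by (intro continuous_closed_preimage) auto
  qed auto
  moreover have "S \<noteq> {}" using bad i t Sdef by blast
  moreover have "bdd_below S" using Sdef by (auto intro: bdd_belowI[of _ a])
  ultimately have t0S: "Inf S \<in> S" by (rule closed_contains_Inf[rotated -1])
  define t0 where "t0 = Inf S"
  have below: "\<And>s. s \<in> S \<Longrightarrow> t0 \<le> s"
    unfolding t0_def using \<open>bdd_below S\<close> by (simp add: cInf_lower)
  have t0a: "t0 > a"
  proof -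
    have "t0 \<ge> a" "t0 \<le> t" using t0S Sdef t0_def by auto
    moreover have "t0 \<noteq> a"
    proof
      assume "t0 = a"
      then obtain j where "j < N" "g j a \<le> 0" using t0S Sdef t0_def by auto
      with init show False by force
    qed
    ultimately show ?thesis by simp
  qed
  have posb: "g j s > 0" if "j < N" "a \<le> s" "s < t0" for j s
  proof (rule ccontr)
    assume "\<not> g j s > 0"
    then have "s \<in> S" using that t0S Sdef t0_def by auto
    with below that show False by force
  qed
  have nn: "g j s \<ge> 0" if "j < N" "a \<le> s" "s \<le> t0" for j s
  proof (cases "s < t0")
    case True then show ?thesis using posb that by force
  next
    case False then have "s = t0" using that by simp
    then show ?thesis using left_limit_nonneg[OF cont[OF that(1)] t0a] posb[OF that(1)] by auto
  qed
  obtain k where k: "k < N" "g k t0 \<le> 0" using t0S Sdef t0_def by auto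
  have gk0: "g k t0 = 0" using nn[OF k(1), of t0] k t0a by auto
  have gpos: "g' k t0 > 0" using step[OF k(1) t0a gk0] nn by blast
  obtain e where e: "e > 0" "\<forall>h>0. t0 - h \<in> {a..} \<longrightarrow> h < e \<longrightarrow> g k (t0 - h) < g k t0"
    using has_real_derivative_pos_inc_left[OF d[OF k(1)] gpos] t0a by auto
  define h where "h = min (e/2) (t0 - a)"
  have h: "h > 0" "t0 - h \<in> {a..}" "h < e" using e t0a by (auto simp: h_def)
  then have "g k (t0 - h) < 0" using e gk0 by auto
  moreover have "g k (t0 - h) > 0" using posb[OF k(1)] h by auto
  ultimately show False by simp
qed



lemma sum_sym_inner:
  fixes y z :: "nat \<Rightarrow> 'b::real_inner" and w :: "nat \<Rightarrow> nat \<Rightarrow> real"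
  assumes "\<And>i j. i < N \<Longrightarrow> j < N \<Longrightarrow> w i j = w j i"
  shows "(\<Sum>i<N. \<Sum>j<N. w i j * ((y j - y i) \<bullet> z i)) =
         - (1/2) * (\<Sum>i<N. \<Sum>j<N. w i j * ((y j - y i) \<bullet> (z j - z i)))"
proof -
  let ?S = "\<Sum>i<N. \<Sum>j<N. w i j * ((y j - y i) \<bullet> z i)"
  have "?S = (\<Sum>j<N. \<Sum>i<N. w i j * ((y j - y i) \<bullet> z i))" by (rule sum.swap)
  also have "\<dots> = (\<Sum>i<N. \<Sum>j<N. - (w i j * ((y j - y i) \<bullet> z j)))"
    using assms by (intro sum.cong refl) (auto simp: inner_diff_left algebra_simps)
  finally have "?S = - (\<Sum>i<N. \<Sum>j<N. w i j * ((y j - y i) \<bullet> z j))" by (simp add: sum_negf)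
  then have "2 * ?S = (\<Sum>i<N. \<Sum>j<N. w i j * ((y j - y i) \<bullet> z i)) - (\<Sum>i<N. \<Sum>j<N. w i j * ((y j - y i) \<bullet> z j))"
    by simp
  also have "\<dots> = (\<Sum>i<N. \<Sum>j<N. w i j * ((y j - y i) \<bullet> z i) - w i j * ((y j - y i) \<bullet> z j))"
    by (simp add: sum_subtractf)
  also have "\<dots> = - (\<Sum>i<N. \<Sum>j<N. w i j * ((y j - y i) \<bullet> (z j - z i)))"
    by (simp add: sum_negf[symmetric] inner_diff_right algebra_simps)
  finally show ?thesis by simp
qed

lemma mono_vec:
  fixes a b :: "'b::real_inner"
  assumes p: "p \<ge> 0"
  shows "(a - b) \<bullet> ((norm a powr p) *\<^sub>R a - (norm b powr p) *\<^sub>R b) \<ge> 0"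
proof -
  define A where "A = norm a powr p"
  define B where "B = norm b powr p"
  have AB: "A \<ge> 0" "B \<ge> 0" by (auto simp: A_def B_def)
  have "(a - b) \<bullet> (A *\<^sub>R a - B *\<^sub>R b) = A * (norm a)^2 - (A + B) * (a \<bullet> b) + B * (norm b)^2"
    using inner_commute[of a b] by (simp add: inner_diff_left inner_diff_right power2_norm_eq_inner algebra_simps)
  also have "\<dots> \<ge> A * (norm a)^2 - (A + B) * (norm a * norm b) + B * (norm b)^2"
    using AB Cauchy_Schwarz_ineq2[of a b] by (simp add: mult_left_mono)
  moreover have "A * (norm a)^2 - (A + B) * (norm a * norm b) + B * (norm b)^2
      = (A * norm a - B * norm b) * (norm a - norm b)"
    by (simp add: power2_eq_square algebra_simps)
  moreover have "(A * norm a - B * norm b) * (norm a - norm b) \<ge> 0"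
  proof (cases "norm a \<ge> norm b")
    case True
    then have "A \<ge> B" unfolding A_def B_def using p by (intro powr_mono2) auto
    then have "A * norm a \<ge> B * norm b" using True AB by (intro mult_mono) auto
    then show ?thesis using True by simp
  next
    case False
    then have "A \<le> B" unfolding A_def B_def using p by (intro powr_mono2) auto
    then have "A * norm a \<le> B * norm b" using False AB by (intro mult_mono) auto
    then show ?thesis using False by (simp add: mult_nonpos_nonpos)
  qed
  ultimately show ?thesis by (simp add: A_def B_def)
qed

lemma powr_between:
  fixes r lo hi e :: real
  assumes "0 < lo" "lo \<le> r" "r \<le> hi"
  shows "r powr e \<le> lo powr e + hi powr e"
proof (cases "e \<ge> 0")
  case True
  then have "r powr e \<le> hi powr e" using assms by (intro powr_mono2) auto
  then show ?thesis by (simp add: add_increasing)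
next
  case False
  then have "r powr e \<le> lo powr e" using assms by (intro powr_mono2') auto
  then show ?thesis by (simp add: add_increasing2)
qed

lemma sq_bound:
  fixes y C \<nu> t :: real
  assumes "y^2 \<le> C * exp (- \<nu> * t)" "C \<ge> 0"
  shows "\<bar>y\<bar> \<le> sqrt C * exp (- (\<nu>/2) * t)"
proof -
  have "(sqrt C * exp (- (\<nu>/2) * t))^2 = C * exp (- \<nu> * t)"
  proof -
    have "exp (- (\<nu>/2) * t) * exp (- (\<nu>/2) * t) = exp (- \<nu> * t)" by (simp add: exp_add[symmetric])
    moreover have "sqrt C * sqrt C = C" using assms(2) by simp
    ultimately show ?thesis by (simp add: power2_eq_square algebra_simps)
  qed
  then have "\<bar>y\<bar>^2 \<le> (sqrt C * exp (- (\<nu>/2) * t))^2" using assms by simp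
  then show ?thesis by (rule power2_le_imp_le) (use assms(2) in simp)
qed



lemma var_identity:
  fixes m u :: "nat \<Rightarrow> real"
  shows "(\<Sum>i<N. \<Sum>j<N. m i * m j * (u j - u i)^2) =
         2 * (\<Sum>i<N. m i) * (\<Sum>i<N. m i * (u i)^2) - 2 * (\<Sum>i<N. m i * u i)^2"
proof -
  have "(\<Sum>i<N. \<Sum>j<N. m i * m j * (u j - u i)^2) =
        (\<Sum>i<N. \<Sum>j<N. m i * (m j * (u j)^2)) + (\<Sum>i<N. \<Sum>j<N. (m i * (u i)^2) * m j)
         - 2 * (\<Sum>i<N. \<Sum>j<N. (m i * u i) * (m j * u j))"
    by (simp add: sum.distrib sum_subtractf sum_distrib_left power2_eq_square algebra_simps)
  also have "(\<Sum>i<N. \<Sum>j<N. m i * (m j * (u j)^2)) = (\<Sum>i<N. m i) * (\<Sum>i<N. m i * (u i)^2)"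
    by (rule sum_product[symmetric])
  also have "(\<Sum>i<N. \<Sum>j<N. (m i * (u i)^2) * m j) = (\<Sum>i<N. m i * (u i)^2) * (\<Sum>i<N. m i)"
    by (rule sum_product[symmetric])
  also have "(\<Sum>i<N. \<Sum>j<N. (m i * u i) * (m j * u j)) = (\<Sum>i<N. m i * u i) * (\<Sum>i<N. m i * u i)"
    by (rule sum_product[symmetric])
  finally show ?thesis by (simp add: power2_eq_square algebra_simps)
qed

locale csf =
  fixes N :: nat and m :: "nat \<Rightarrow> real" and \<sigma> p \<kappa> :: real and \<phi> :: "real \<Rightarrow> real"
    and x v :: "nat \<Rightarrow> real \<Rightarrow> 'a::euclidean_space" and \<theta> :: "nat \<Rightarrow> real \<Rightarrow> real" and e :: 'a
  assumes N: "N \<ge> 1"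
    and m_pos: "\<And>i. i < N \<Longrightarrow> m i > 0"
    and \<sigma>_pos: "\<sigma> > 0" and p_pos: "p > 0" and \<kappa>_pos: "\<kappa> > 0"
    and kernel: "comm_kernel \<phi>"
    and phi_star_pos: "(INF r\<in>{0..}. \<phi> r) > 0"
    and cond: "(INF r\<in>{0..}. \<phi> r) * (\<Sum>i<N. m i) >
               \<sigma> * ((\<Sum>i<N. m i * \<theta> i 0) / (\<Sum>i<N. m i))"
    and sol: "CSF_solution N m \<sigma> p \<kappa> \<phi> x v \<theta>"
    and theta0: "\<And>i. i < N \<Longrightarrow> \<theta> i 0 > 0"
    and e_norm: "norm e = 1" and e_pos: "\<And>i. i < N \<Longrightarrow> e \<bullet> v i 0 > 0"
begin

definition "M = (\<Sum>i<N. m i)"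
definition "thb = (\<Sum>i<N. m i * \<theta> i 0) / M"
definition "phis = (INF r\<in>{0..}. \<phi> r)"
definition "mmin = Min (m ` {..<N})"
definition "w t i j = m i * m j * \<phi> (norm (x i t - x j t))" for t i j
definition "Fv i t = (\<Sum>j<N. (m j * \<phi> (norm (x i t - x j t))) *\<^sub>R (v j t - v i t))
             + (\<sigma> * (\<theta> i t - norm (v i t) powr p)) *\<^sub>R v i t" for i t
definition "Fth i t = \<kappa> * (\<Sum>j<N. m j * \<phi> (norm (x i t - x j t)) * (\<theta> j t - \<theta> i t))" for i t

lemma M_pos: "M > 0"
proof -
  have "(\<Sum>i<N. m i) \<ge> m 0" using N m_pos by (intro member_le_sum) (auto intro: less_imp_le)
  then show ?thesis using m_pos[of 0] N unfolding M_def by linarith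
qed

lemma mmin: "mmin > 0" "\<And>i. i < N \<Longrightarrow> mmin \<le> m i"
proof -
  have "0 \<in> {..<N}" using N by simp
  then have ne: "m ` {..<N} \<noteq> {}" by blast
  have "mmin \<in> m ` {..<N}" unfolding mmin_def using ne by (intro Min_in) auto
  then show "mmin > 0" using m_pos by auto
  show "mmin \<le> m i" if "i < N" for i unfolding mmin_def using that by (intro Min_le) auto
qed

lemma thb_pos: "thb > 0"
proof -
  have "(\<Sum>i<N. m i * \<theta> i 0) \<ge> m 0 * \<theta> 0 0"
    using N m_pos theta0 by (intro member_le_sum) (auto intro: less_imp_le)
  moreover have "m 0 * \<theta> 0 0 > 0" using N m_pos theta0 by auto
  ultimately show ?thesis using M_pos unfolding thb_def by auto
qed

lemma phi_pos: "r \<ge> 0 \<Longrightarrow> \<phi> r > 0" using kernel unfolding comm_kernel_def by auto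
lemma phi_le0: "r \<ge> 0 \<Longrightarrow> \<phi> r \<le> \<phi> 0" using kernel unfolding comm_kernel_def by auto
lemma phis_le: "r \<ge> 0 \<Longrightarrow> phis \<le> \<phi> r"
proof -
  have "bdd_below (\<phi> ` {0..})" by (rule bdd_belowI[where m=0]) (auto intro: less_imp_le phi_pos)
  then show "r \<ge> 0 \<Longrightarrow> phis \<le> \<phi> r" unfolding phis_def by (intro cINF_lower) auto
qed
lemma phis_pos: "phis > 0" using phi_star_pos by (simp add: phis_def)
lemma cond': "phis * M > \<sigma> * thb" using cond by (simp add: phis_def M_def thb_def)

lemma w_sym: "w t i j = w t j i" unfolding w_def by (simp add: norm_minus_commute algebra_simps)
lemma w_lower: "i < N \<Longrightarrow> j < N \<Longrightarrow> w t i j \<ge> phis * (m i * m j)"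
  unfolding w_def using phis_le[of "norm (x i t - x j t)"] m_pos[of i] m_pos[of j]
  by (simp add: mult_right_mono algebra_simps)
lemma w_nonneg: "i < N \<Longrightarrow> j < N \<Longrightarrow> w t i j \<ge> 0"
  unfolding w_def using phi_pos[of "norm (x i t - x j t)"] m_pos[of i] m_pos[of j] by simp

lemma dv: "i < N \<Longrightarrow> t \<ge> 0 \<Longrightarrow> (v i has_vector_derivative Fv i t) (at t within {0..})"
  using sol unfolding CSF_solution_def Fv_def by blast
lemma dth: "i < N \<Longrightarrow> t \<ge> 0 \<Longrightarrow> (\<theta> i has_real_derivative Fth i t) (at t within {0..})"
  using sol unfolding CSF_solution_def Fth_def by blast

lemma weighted_theta_deriv0: "(\<Sum>i<N. m i * Fth i t) = 0"
proof -
  have "(\<Sum>i<N. m i * Fth i t) = \<kappa> * (\<Sum>i<N. \<Sum>j<N. w t i j * ((\<theta> j t - \<theta> i t) \<bullet> (1::real)))"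
    unfolding Fth_def w_def by (simp add: sum_distrib_left algebra_simps)
  also have "\<dots> = 0" using sum_sym_inner[of N "w t" "\<lambda>j. \<theta> j t" "\<lambda>_. (1::real)"] w_sym by simp
  finally show ?thesis .
qed

lemma theta_mass: "t \<ge> 0 \<Longrightarrow> (\<Sum>i<N. m i * \<theta> i t) = M * thb"
proof -
  assume t: "t \<ge> 0"
  have d: "((\<lambda>t. \<Sum>i<N. m i * \<theta> i t) has_real_derivative (\<Sum>n<N. Fth n s * m n)) (at s within {0..})"
    if "s \<ge> 0" for s
    by (rule derivative_eq_intros dth that refl | simp)+
  have d1: "((\<lambda>t. \<Sum>i<N. m i * \<theta> i t) has_real_derivative 0) (at s within {0..})" if "s \<ge> 0" for s
    using d[OF that] weighted_theta_deriv0 by (simp add: mult.commute)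
  have d2: "((\<lambda>t. - (\<Sum>i<N. m i * \<theta> i t)) has_real_derivative - 0) (at s within {0..})" if "s \<ge> 0" for s
    using d1[OF that] by (rule derivative_intros)
  have "(\<Sum>i<N. m i * \<theta> i 0) \<le> (\<Sum>i<N. m i * \<theta> i t)"
    by (rule mono_deriv[where f'="\<lambda>_. 0" and a=0]) (use d1 t in auto)
  moreover have "- (\<Sum>i<N. m i * \<theta> i 0) \<le> - (\<Sum>i<N. m i * \<theta> i t)"
    by (rule mono_deriv[where f'="\<lambda>_. - 0" and a=0]) (use d2 t in auto)
  ultimately show ?thesis using M_pos by (simp add: thb_def)
qed

end


context csf
begin

definition "Eth t = (\<Sum>i<N. m i * (\<theta> i t - thb)^2)" for t

lemma Eth_deriv: "s \<ge> 0 \<Longrightarrow> (Eth has_real_derivative (\<Sum>i<N. m i * (2 * (\<theta> i s - thb) * Fth i s))) (at s within {0..})"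
  unfolding Eth_def
  by (rule derivative_eq_intros dth refl | simp add: algebra_simps)+

lemma Eth_deriv_bound: "s \<ge> 0 \<Longrightarrow> (\<Sum>i<N. m i * (2 * (\<theta> i s - thb) * Fth i s)) \<le> - (2 * \<kappa> * phis * M) * Eth s"
proof -
  assume s: "s \<ge> 0"
  have "(\<Sum>i<N. m i * (2 * (\<theta> i s - thb) * Fth i s)) =
        2 * \<kappa> * (\<Sum>i<N. \<Sum>j<N. w s i j * ((\<theta> j s - \<theta> i s) \<bullet> (\<theta> i s - thb)))"
    unfolding Fth_def w_def by (simp add: sum_distrib_left algebra_simps)
  also have "\<dots> = 2 * \<kappa> * (- (1/2) * (\<Sum>i<N. \<Sum>j<N. w s i j * ((\<theta> j s - \<theta> i s) \<bullet> ((\<theta> j s - thb) - (\<theta> i s - thb)))))"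
    using sum_sym_inner[of N "w s" "\<lambda>j. \<theta> j s" "\<lambda>i. \<theta> i s - thb"] w_sym by simp
  also have "\<dots> = - \<kappa> * (\<Sum>i<N. \<Sum>j<N. w s i j * (\<theta> j s - \<theta> i s)^2)"
    by (simp add: power2_eq_square)
  also have "\<dots> \<le> - \<kappa> * (\<Sum>i<N. \<Sum>j<N. phis * (m i * m j) * (\<theta> j s - \<theta> i s)^2)"
    using \<kappa>_pos w_lower by (auto intro!: sum_mono mult_right_mono)
  also have "(\<Sum>i<N. \<Sum>j<N. phis * (m i * m j) * (\<theta> j s - \<theta> i s)^2)
       = phis * (\<Sum>i<N. \<Sum>j<N. m i * m j * ((\<theta> j s - thb) - (\<theta> i s - thb))^2)"
    by (simp add: sum_distrib_left algebra_simps)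
  also have "(\<Sum>i<N. \<Sum>j<N. m i * m j * ((\<theta> j s - thb) - (\<theta> i s - thb))^2)
      = 2 * M * Eth s - 2 * (\<Sum>i<N. m i * (\<theta> i s - thb))^2"
    unfolding var_identity M_def Eth_def ..
  also have "(\<Sum>i<N. m i * (\<theta> i s - thb)) = 0"
    using theta_mass[OF s] by (simp add: right_diff_distrib sum_subtractf sum_distrib_right[symmetric] M_def)
  finally show ?thesis by (simp add: algebra_simps)
qed

lemma theta_conv: "\<exists>C g. C \<ge> 0 \<and> g > 0 \<and> (\<forall>i<N. \<forall>t\<ge>0. \<bar>\<theta> i t - thb\<bar> \<le> C * exp (- g * t))"
proof -
  have "\<exists>C \<nu>. C \<ge> 0 \<and> \<nu> > 0 \<and> (\<forall>t\<ge>0. Eth t \<le> C * exp (- \<nu> * t))"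
    by (rule gronwall_exp[where f'="\<lambda>s. \<Sum>i<N. m i * (2 * (\<theta> i s - thb) * Fth i s)"
          and \<alpha>="2 * \<kappa> * phis * M" and K=0 and \<mu>=1])
      (use Eth_deriv Eth_deriv_bound \<kappa>_pos phis_pos M_pos in auto)
  then obtain C \<nu> where C: "C \<ge> 0" "\<nu> > 0" "\<forall>t\<ge>0. Eth t \<le> C * exp (- \<nu> * t)" by blast
  have "\<bar>\<theta> i t - thb\<bar> \<le> sqrt (C / mmin) * exp (- (\<nu>/2) * t)" if i: "i < N" and t: "t \<ge> 0" for i t
  proof (rule sq_bound)
    have "m i * (\<theta> i t - thb)^2 \<le> Eth t"
      unfolding Eth_def using i m_pos by (intro member_le_sum) (auto intro!: mult_nonneg_nonneg intro: less_imp_le)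
    also have "\<dots> \<le> C * exp (- \<nu> * t)" using C t by auto
    finally have "m i * (\<theta> i t - thb)^2 \<le> C * exp (- \<nu> * t)" .
    moreover have "mmin * (\<theta> i t - thb)^2 \<le> m i * (\<theta> i t - thb)^2"
      using mmin i by (intro mult_right_mono) auto
    ultimately have "mmin * (\<theta> i t - thb)^2 \<le> C * exp (- \<nu> * t)" by linarith
    then show "(\<theta> i t - thb)^2 \<le> C / mmin * exp (- \<nu> * t)"
      using mmin(1) by (simp add: field_simps)
    show "C / mmin \<ge> 0" using C mmin by simp
  qed
  then have "sqrt (C / mmin) \<ge> 0 \<and> \<nu>/2 > 0 \<and> (\<forall>i<N. \<forall>t\<ge>0. \<bar>\<theta> i t - thb\<bar> \<le> sqrt (C / mmin) * exp (- (\<nu>/2) * t))"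
    using C mmin by auto
  then show ?thesis by blast
qed

end


lemma inner_deriv:
  fixes f g :: "real \<Rightarrow> 'b::real_inner"
  assumes "(f has_vector_derivative f') (at t within S)" "(g has_vector_derivative g') (at t within S)"
  shows "((\<lambda>t. f t \<bullet> g t) has_real_derivative (f t \<bullet> g' + f' \<bullet> g t)) (at t within S)"
  using bounded_bilinear.has_vector_derivative[OF bounded_bilinear_inner assms]
  by (simp add: has_real_derivative_iff_has_vector_derivative)

context csf
begin

lemma theta_bound: "\<exists>\<Theta>>0. \<forall>i<N. \<forall>t\<ge>0. \<bar>\<theta> i t\<bar> \<le> \<Theta>"
proof -
  obtain C g where C: "C \<ge> 0" "g > 0" "\<forall>i<N. \<forall>t\<ge>0. \<bar>\<theta> i t - thb\<bar> \<le> C * exp (- g * t)"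
    using theta_conv by blast
  have "\<bar>\<theta> i t\<bar> \<le> thb + C + 1" if "i < N" "t \<ge> 0" for i t
  proof -
    have "exp (- g * t) \<le> 1" using C that by simp
    then have "C * exp (- g * t) \<le> C" using C by (simp add: mult_left_le)
    then show ?thesis using C that thb_pos by force
  qed
  then show ?thesis using thb_pos C by (intro exI[of _ "thb + C + 1"]) auto
qed

lemma v_inner_Fv: "v i t \<bullet> Fv i t = (\<Sum>j<N. (m j * \<phi> (norm (x i t - x j t))) * (v i t \<bullet> v j t - v i t \<bullet> v i t))
    + \<sigma> * (\<theta> i t - norm (v i t) powr p) * (v i t \<bullet> v i t)"
  unfolding Fv_def by (simp add: inner_add_right inner_sum_right inner_diff_right)

lemma speed_bound: "\<exists>Q>0. \<forall>i<N. \<forall>t\<ge>0. norm (v i t) \<le> Q"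
proof -
  obtain \<Theta> where Th: "\<Theta> > 0" "\<forall>i<N. \<forall>t\<ge>0. \<bar>\<theta> i t\<bar> \<le> \<Theta>" using theta_bound by blast
  define Q where "Q = (\<Sum>i<N. norm (v i 0)) + \<Theta> powr (1/p) + 1"
  have Q0: "norm (v i 0) < Q" if "i < N" for i
  proof -
    have "norm (v i 0) \<le> (\<Sum>i<N. norm (v i 0))" using that by (intro member_le_sum) auto
    then show ?thesis unfolding Q_def by (smt (verit) powr_ge_zero)
  qed
  have Qp: "Q powr p > \<Theta>"
  proof -
    have "\<Theta> powr (1/p) < Q" unfolding Q_def by (smt (verit) norm_ge_zero sum_nonneg)
    then have "(\<Theta> powr (1/p)) powr p < Q powr p" using p_pos by (intro powr_less_mono2) auto
    then show ?thesis using p_pos Th by (simp add: powr_powr)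
  qed
  have "norm (v 0 0) < Q" using Q0 N by simp
  then have Qpos: "Q > 0" using norm_ge_zero[of "v 0 0"] by linarith
  define g where "g i t = Q^2 - v i t \<bullet> v i t" for i t
  define g' where "g' i t = - (v i t \<bullet> Fv i t + Fv i t \<bullet> v i t)" for i t
  have gpos: "g i t > 0" if "i < N" "t \<ge> 0" for i t
  proof (rule barrier[of N 0 g g'])
    show "(g i has_real_derivative g' i t) (at t within {0..})" if "i < N" "t \<ge> 0" for i t
      unfolding g_def g'_def
      by (rule derivative_eq_intros inner_deriv dv that refl | simp)+
    show "g i 0 > 0" if "i < N" for i
      using Q0[OF that] Qpos unfolding g_def by (simp add: power2_norm_eq_inner[symmetric] power_strict_mono)
    fix i t assume i: "i < N" and t: "t > 0" and g0: "g i t = 0"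
      and nn: "\<And>j s. j < N \<Longrightarrow> 0 \<le> s \<Longrightarrow> s \<le> t \<Longrightarrow> g j s \<ge> 0"
    have ni: "norm (v i t) = Q" using g0 Qpos unfolding g_def
      by (metis power2_norm_eq_inner eq_iff_diff_eq_0 norm_ge_zero power2_eq_iff_nonneg less_imp_le)
    have nj: "norm (v j t) \<le> Q" if "j < N" for j
    proof -
      have "(norm (v j t))^2 \<le> Q^2" using nn[OF that _ order.refl] t unfolding g_def
        by (simp add: power2_norm_eq_inner)
      then show ?thesis using Qpos by (simp add: abs_le_square_iff)
    qed
    have al: "(\<Sum>j<N. (m j * \<phi> (norm (x i t - x j t))) * (v i t \<bullet> v j t - v i t \<bullet> v i t)) \<le> 0"
    proof (intro sum_nonpos)
      fix j assume j: "j \<in> {..<N}"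
      have "v i t \<bullet> v j t \<le> norm (v i t) * norm (v j t)" by (rule norm_cauchy_schwarz)
      also have "\<dots> \<le> Q * Q" using nj j ni Qpos by (auto intro: mult_left_mono)
      also have "\<dots> = v i t \<bullet> v i t" using ni by (simp add: power2_norm_eq_inner[symmetric] power2_eq_square)
      finally have "v i t \<bullet> v j t - v i t \<bullet> v i t \<le> 0" by simp
      moreover have "m j * \<phi> (norm (x i t - x j t)) \<ge> 0" using m_pos j phi_pos by (auto intro: less_imp_le)
      ultimately show "(m j * \<phi> (norm (x i t - x j t))) * (v i t \<bullet> v j t - v i t \<bullet> v i t) \<le> 0"
        by (simp add: mult_nonneg_nonpos)
    qed
    have "\<bar>\<theta> i t\<bar> \<le> \<Theta>" using Th i t by simp
    then have "\<theta> i t \<le> \<Theta>" by simp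
    then have "\<theta> i t - norm (v i t) powr p < 0" using Qp ni by simp
    moreover have "v i t \<bullet> v i t > 0" using ni Qpos by (simp add: power2_norm_eq_inner[symmetric])
    ultimately have "\<sigma> * (\<theta> i t - norm (v i t) powr p) * (v i t \<bullet> v i t) < 0"
      using \<sigma>_pos by (simp add: mult_pos_neg mult_neg_pos)
    then have "v i t \<bullet> Fv i t < 0" using al v_inner_Fv by simp
    then show "g' i t > 0" unfolding g'_def by (simp add: inner_commute)
  qed (use that in auto)
  have "norm (v i t) \<le> Q" if "i < N" "t \<ge> 0" for i t
  proof -
    have "(norm (v i t))^2 \<le> Q^2" using gpos[OF that] unfolding g_def by (simp add: power2_norm_eq_inner)
    then show ?thesis using Qpos by (simp add: abs_le_square_iff)
  qed
  then show ?thesis using Qpos by blast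
qed

end


context csf
begin

lemma e_inner_Fv: "e \<bullet> Fv i t = (\<Sum>j<N. (m j * \<phi> (norm (x i t - x j t))) * (e \<bullet> v j t - e \<bullet> v i t))
    + \<sigma> * (\<theta> i t - norm (v i t) powr p) * (e \<bullet> v i t)"
  unfolding Fv_def by (simp add: inner_add_right inner_sum_right inner_diff_right)

lemma e_deriv: "i < N \<Longrightarrow> t \<ge> 0 \<Longrightarrow> ((\<lambda>t. e \<bullet> v i t) has_real_derivative e \<bullet> Fv i t) (at t within {0..})"
proof -
  assume "i < N" "t \<ge> 0"
  from inner_deriv[OF has_vector_derivative_const dv[OF this]] show ?thesis by simp
qed

lemma sector: "i < N \<Longrightarrow> t \<ge> 0 \<Longrightarrow> e \<bullet> v i t > 0"
proof -
  obtain \<Theta> where Th: "\<Theta> > 0" "\<forall>i<N. \<forall>t\<ge>0. \<bar>\<theta> i t\<bar> \<le> \<Theta>" using theta_bound by blast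
  obtain Q where Q: "Q > 0" "\<forall>i<N. \<forall>t\<ge>0. norm (v i t) \<le> Q" using speed_bound by blast
  define L where "L = M * \<phi> 0 + \<sigma> * (\<Theta> + Q powr p) + 1"
  define g where "g i t = exp (L * t) * (e \<bullet> v i t) - (e \<bullet> v i 0) / 2" for i t
  define g' where "g' i t = L * exp (L * t) * (e \<bullet> v i t) + exp (L * t) * (e \<bullet> Fv i t)" for i t
  have gpos: "g i t > 0" if "i < N" "t \<ge> 0" for i t
  proof (rule barrier[of N 0 g g'])
    show "(g i has_real_derivative g' i t) (at t within {0..})" if "i < N" "t \<ge> 0" for i t
      unfolding g_def g'_def
      by (rule derivative_eq_intros e_deriv that refl | simp)+
    show "g i 0 > 0" if "i < N" for i using e_pos[OF that] unfolding g_def by simp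
    fix i t assume i: "i < N" and t: "t > 0" and g0: "g i t = 0"
      and nn: "\<And>j s. j < N \<Longrightarrow> 0 \<le> s \<Longrightarrow> s \<le> t \<Longrightarrow> g j s \<ge> 0"
    have pj: "e \<bullet> v j t > 0" if "j < N" for j
    proof -
      have "exp (L * t) * (e \<bullet> v j t) \<ge> (e \<bullet> v j 0) / 2" using nn[OF that, of t] t unfolding g_def by simp
      then have "exp (L * t) * (e \<bullet> v j t) > 0" using e_pos[OF that] by linarith
      then show ?thesis by (simp add: zero_less_mult_iff)
    qed
    have sumA: "(\<Sum>j<N. (m j * \<phi> (norm (x i t - x j t))) * (e \<bullet> v j t - e \<bullet> v i t))
        \<ge> - (M * \<phi> 0) * (e \<bullet> v i t)"
    proof -
      have "(\<Sum>j<N. (m j * \<phi> (norm (x i t - x j t))) * (e \<bullet> v j t - e \<bullet> v i t))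
          \<ge> (\<Sum>j<N. - (m j * \<phi> 0) * (e \<bullet> v i t))"
      proof (rule sum_mono)
        fix j assume j: "j \<in> {..<N}"
        have a0: "m j * \<phi> (norm (x i t - x j t)) \<ge> 0" using m_pos j phi_pos by (auto intro: less_imp_le)
        have a1: "m j * \<phi> (norm (x i t - x j t)) \<le> m j * \<phi> 0"
          using m_pos j phi_le0 by (auto intro: mult_left_mono less_imp_le)
        have "(m j * \<phi> (norm (x i t - x j t))) * (e \<bullet> v j t - e \<bullet> v i t)
            \<ge> (m j * \<phi> (norm (x i t - x j t))) * (- (e \<bullet> v i t))"
        proof -
          have "e \<bullet> v j t > 0" using pj j by simp
          then show ?thesis using a0 by (intro mult_left_mono) auto
        qed
        also have "(m j * \<phi> (norm (x i t - x j t))) * (- (e \<bullet> v i t)) \<ge> (m j * \<phi> 0) * (- (e \<bullet> v i t))"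
          using a1 pj[OF i] by (intro mult_right_mono_neg) auto
        finally show "- (m j * \<phi> 0) * (e \<bullet> v i t) \<le> (m j * \<phi> (norm (x i t - x j t))) * (e \<bullet> v j t - e \<bullet> v i t)"
          by simp
      qed
      also have "(\<Sum>j<N. - (m j * \<phi> 0) * (e \<bullet> v i t)) = - (M * \<phi> 0) * (e \<bullet> v i t)"
        by (simp add: M_def sum_distrib_right sum_negf)
      finally show ?thesis .
    qed
    have fr: "\<sigma> * (\<theta> i t - norm (v i t) powr p) * (e \<bullet> v i t) \<ge> - (\<sigma> * (\<Theta> + Q powr p)) * (e \<bullet> v i t)"
    proof -
      have "\<bar>\<theta> i t\<bar> \<le> \<Theta>" using Th i t by simp
      moreover have "norm (v i t) powr p \<le> Q powr p" using Q i t p_pos by (intro powr_mono2) auto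
      ultimately have "\<theta> i t - norm (v i t) powr p \<ge> - (\<Theta> + Q powr p)" by linarith
      then have "\<sigma> * (\<theta> i t - norm (v i t) powr p) \<ge> - (\<sigma> * (\<Theta> + Q powr p))"
        using mult_left_mono[OF _ less_imp_le[OF \<sigma>_pos]] by (metis minus_mult_right)
      then show ?thesis using pj[OF i] by (intro mult_right_mono) auto
    qed
    have "L * (e \<bullet> v i t) + e \<bullet> Fv i t \<ge> e \<bullet> v i t"
      using sumA fr e_inner_Fv[of i t] unfolding L_def by (simp add: algebra_simps)
    then have "L * (e \<bullet> v i t) + e \<bullet> Fv i t > 0" using pj[OF i] by linarith
    then show "g' i t > 0" unfolding g'_def
      by (metis distrib_left exp_gt_zero mult.assoc mult.left_commute mult_pos_pos)
  qed (use that in auto)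
  then show "i < N \<Longrightarrow> t \<ge> 0 \<Longrightarrow> e \<bullet> v i t > 0"
  proof -
    assume it: "i < N" "t \<ge> 0"
    have "exp (L * t) * (e \<bullet> v i t) > 0" using gpos[OF it] e_pos[OF it(1)] unfolding g_def by linarith
    then show ?thesis by (simp add: zero_less_mult_iff)
  qed
qed

end


lemma fric_pair:
  fixes a b :: "'b::real_inner"
  assumes p: "p \<ge> 0" and na: "norm a \<le> Q" and nb: "norm b \<le> Q"
  shows "(a - b) \<bullet> ((ta - norm a powr p) *\<^sub>R a - (tb - norm b powr p) *\<^sub>R b)
         \<le> T * (norm (a - b))^2 + 2 * Q^2 * (\<bar>ta - T\<bar> + \<bar>tb - T\<bar>)"
proof -
  have eq: "(ta - norm a powr p) *\<^sub>R a - (tb - norm b powr p) *\<^sub>R b =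
     T *\<^sub>R (a - b) + ((ta - T) *\<^sub>R a - (tb - T) *\<^sub>R b) - ((norm a powr p) *\<^sub>R a - (norm b powr p) *\<^sub>R b)"
    by (simp add: algebra_simps)
  have Q: "Q \<ge> 0" using na norm_ge_zero[of a] by linarith
  have nab: "norm (a - b) \<le> 2 * Q" using na nb norm_triangle_ineq4[of a b] by linarith
  have "(a - b) \<bullet> ((ta - T) *\<^sub>R a - (tb - T) *\<^sub>R b) \<le> norm (a - b) * norm ((ta - T) *\<^sub>R a - (tb - T) *\<^sub>R b)"
    by (rule norm_cauchy_schwarz)
  also have "\<dots> \<le> (2 * Q) * (\<bar>ta - T\<bar> * Q + \<bar>tb - T\<bar> * Q)"
  proof (rule mult_mono[OF nab])
    have "norm ((ta - T) *\<^sub>R a - (tb - T) *\<^sub>R b) \<le> norm ((ta - T) *\<^sub>R a) + norm ((tb - T) *\<^sub>R b)"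
      by (rule norm_triangle_ineq4)
    also have "\<dots> \<le> \<bar>ta - T\<bar> * Q + \<bar>tb - T\<bar> * Q"
      using na nb by (auto intro!: add_mono mult_left_mono)
    finally show "norm ((ta - T) *\<^sub>R a - (tb - T) *\<^sub>R b) \<le> \<bar>ta - T\<bar> * Q + \<bar>tb - T\<bar> * Q" .
  qed (use Q in auto)
  also have "\<dots> = 2 * Q^2 * (\<bar>ta - T\<bar> + \<bar>tb - T\<bar>)" by (simp add: power2_eq_square algebra_simps)
  finally have m1: "(a - b) \<bullet> ((ta - T) *\<^sub>R a - (tb - T) *\<^sub>R b) \<le> 2 * Q^2 * (\<bar>ta - T\<bar> + \<bar>tb - T\<bar>)" .
  have m2: "(a - b) \<bullet> ((norm a powr p) *\<^sub>R a - (norm b powr p) *\<^sub>R b) \<ge> 0" by (rule mono_vec[OF p])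
  show ?thesis unfolding eq using m1 m2
    by (simp add: inner_add_right inner_diff_right power2_norm_eq_inner)
qed

context csf
begin

definition "Al i t = (\<Sum>j<N. (m j * \<phi> (norm (x i t - x j t))) *\<^sub>R (v j t - v i t))" for i t
definition "fr i t = (\<theta> i t - norm (v i t) powr p) *\<^sub>R v i t" for i t
definition "D2 t = (\<Sum>i<N. \<Sum>j<N. m i * m j * ((v i t - v j t) \<bullet> (v i t - v j t)))" for t

lemma Fv_split: "Fv i t = Al i t + \<sigma> *\<^sub>R fr i t"
  unfolding Fv_def Al_def fr_def by simp

lemma D2_deriv: "s \<ge> 0 \<Longrightarrow> (D2 has_real_derivative
   (\<Sum>i<N. \<Sum>j<N. m i * m j * ((v i s - v j s) \<bullet> (Fv i s - Fv j s) + (Fv i s - Fv j s) \<bullet> (v i s - v j s)))) (at s within {0..})"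
  unfolding D2_def
  by (rule derivative_eq_intros inner_deriv dv refl | simp add: ac_simps)+

lemma align_part: "(\<Sum>i<N. \<Sum>j<N. m i * m j * ((v i t - v j t) \<bullet> (Al i t - Al j t))) \<le> - (M * phis) * D2 t"
proof -
  define u where "u i j = m i * m j" for i j
  have usym: "u i j = u j i" for i j by (simp add: u_def)
  have A: "(\<Sum>i<N. \<Sum>j<N. m i * m j * ((v i t - v j t) \<bullet> (Al i t - Al j t)))
      = -2 * (\<Sum>i<N. \<Sum>j<N. u i j * ((v j t - v i t) \<bullet> Al i t))"
  proof -
    have "(\<Sum>i<N. \<Sum>j<N. m i * m j * ((v i t - v j t) \<bullet> (Al i t - Al j t)))
        = (\<Sum>i<N. \<Sum>j<N. u i j * ((v j t - v i t) \<bullet> (Al j t - Al i t)))"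
      unfolding u_def by (intro sum.cong refl) (simp add: inner_diff_left inner_diff_right algebra_simps)
    also have "\<dots> = -2 * (\<Sum>i<N. \<Sum>j<N. u i j * ((v j t - v i t) \<bullet> Al i t))"
      using sum_sym_inner[of N u "\<lambda>i. v i t" "\<lambda>i. Al i t"] usym by simp
    finally show ?thesis .
  qed
  define S where "S = (\<Sum>j<N. m j *\<^sub>R v j t)"
  have B: "(\<Sum>i<N. \<Sum>j<N. u i j * ((v j t - v i t) \<bullet> Al i t)) = - (\<Sum>i<N. m i * ((M *\<^sub>R v i t - S) \<bullet> Al i t))"
  proof -
    have "(\<Sum>i<N. \<Sum>j<N. u i j * ((v j t - v i t) \<bullet> Al i t)) = (\<Sum>i<N. m i * ((\<Sum>j<N. m j *\<^sub>R (v j t - v i t)) \<bullet> Al i t))"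
      unfolding u_def by (simp add: inner_sum_left sum_distrib_left algebra_simps)
    also have "\<dots> = (\<Sum>i<N. m i * ((S - M *\<^sub>R v i t) \<bullet> Al i t))"
      by (simp add: S_def M_def scaleR_diff_right sum_subtractf scaleR_sum_left)
    also have "\<dots> = - (\<Sum>i<N. m i * ((M *\<^sub>R v i t - S) \<bullet> Al i t))"
      by (simp add: sum_negf[symmetric] inner_diff_left algebra_simps)
    finally show ?thesis .
  qed
  have C: "(\<Sum>i<N. m i * ((M *\<^sub>R v i t - S) \<bullet> Al i t)) = (\<Sum>i<N. \<Sum>k<N. w t i k * ((v k t - v i t) \<bullet> (M *\<^sub>R v i t - S)))"
    unfolding Al_def w_def by (simp add: inner_sum_right sum_distrib_left inner_commute algebra_simps)
  also have "\<dots> = - (1/2) * (\<Sum>i<N. \<Sum>k<N. w t i k * ((v k t - v i t) \<bullet> ((M *\<^sub>R v k t - S) - (M *\<^sub>R v i t - S))))"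
    using sum_sym_inner[of N "w t" "\<lambda>i. v i t" "\<lambda>i. M *\<^sub>R v i t - S"] w_sym by simp
  also have "\<dots> = - (M/2) * (\<Sum>i<N. \<Sum>k<N. w t i k * ((v i t - v k t) \<bullet> (v i t - v k t)))"
  proof -
    have "(M *\<^sub>R v k t - S) - (M *\<^sub>R v i t - S) = M *\<^sub>R (v k t - v i t)" for i k
      by (simp add: scaleR_diff_right)
    then have "(\<Sum>i<N. \<Sum>k<N. w t i k * ((v k t - v i t) \<bullet> ((M *\<^sub>R v k t - S) - (M *\<^sub>R v i t - S))))
        = M * (\<Sum>i<N. \<Sum>k<N. w t i k * ((v i t - v k t) \<bullet> (v i t - v k t)))"
      by (simp add: sum_distrib_left inner_diff_left inner_diff_right inner_commute algebra_simps)
    then show ?thesis by simp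
  qed
  finally have C': "(\<Sum>i<N. m i * ((M *\<^sub>R v i t - S) \<bullet> Al i t)) = - (M/2) * (\<Sum>i<N. \<Sum>k<N. w t i k * ((v i t - v k t) \<bullet> (v i t - v k t)))" .
  have low: "(\<Sum>i<N. \<Sum>k<N. w t i k * ((v i t - v k t) \<bullet> (v i t - v k t))) \<ge> phis * D2 t"
  proof -
    have "phis * D2 t = (\<Sum>i<N. \<Sum>k<N. phis * (m i * m k) * ((v i t - v k t) \<bullet> (v i t - v k t)))"
      unfolding D2_def by (simp add: sum_distrib_left algebra_simps)
    also have "\<dots> \<le> (\<Sum>i<N. \<Sum>k<N. w t i k * ((v i t - v k t) \<bullet> (v i t - v k t)))"
      using w_lower by (intro sum_mono mult_right_mono) auto
    finally show ?thesis .
  qed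
  have "(\<Sum>i<N. \<Sum>j<N. m i * m j * ((v i t - v j t) \<bullet> (Al i t - Al j t)))
      = - M * (\<Sum>i<N. \<Sum>k<N. w t i k * ((v i t - v k t) \<bullet> (v i t - v k t)))"
    using A B C' by simp
  also have "\<dots> \<le> - M * (phis * D2 t)" using low M_pos by simp
  finally show ?thesis by simp
qed

end


context csf
begin

lemma fric_part:
  assumes Q: "\<forall>i<N. \<forall>t\<ge>0. norm (v i t) \<le> Q"
    and Th: "\<forall>i<N. \<forall>t\<ge>0. \<bar>\<theta> i t - thb\<bar> \<le> C * exp (- g * t)" and t: "t \<ge> 0"
  shows "(\<Sum>i<N. \<Sum>j<N. m i * m j * ((v i t - v j t) \<bullet> (fr i t - fr j t)))
     \<le> thb * D2 t + 4 * Q^2 * M^2 * C * exp (- g * t)"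
proof -
  have "(\<Sum>i<N. \<Sum>j<N. m i * m j * ((v i t - v j t) \<bullet> (fr i t - fr j t)))
     \<le> (\<Sum>i<N. \<Sum>j<N. thb * (m i * m j * ((v i t - v j t) \<bullet> (v i t - v j t))) + (m i * m j) * (4 * Q^2 * C * exp (- g * t)))"
  proof (intro sum_mono)
    fix i j assume i: "i \<in> {..<N}" and j: "j \<in> {..<N}"
    have mm: "m i * m j \<ge> 0" using m_pos i j by (simp add: less_imp_le)
    have "(v i t - v j t) \<bullet> (fr i t - fr j t) \<le> thb * (norm (v i t - v j t))^2 + 2 * Q^2 * (\<bar>\<theta> i t - thb\<bar> + \<bar>\<theta> j t - thb\<bar>)"
      unfolding fr_def using Q i j t p_pos by (intro fric_pair) auto
    also have "\<dots> \<le> thb * ((v i t - v j t) \<bullet> (v i t - v j t)) + 4 * Q^2 * C * exp (- g * t)"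
    proof -
      have "\<bar>\<theta> i t - thb\<bar> \<le> C * exp (- g * t)" using Th i t by simp
      moreover have "\<bar>\<theta> j t - thb\<bar> \<le> C * exp (- g * t)" using Th j t by simp
      ultimately have "\<bar>\<theta> i t - thb\<bar> + \<bar>\<theta> j t - thb\<bar> \<le> 2 * (C * exp (- g * t))" by linarith
      then have "2 * Q^2 * (\<bar>\<theta> i t - thb\<bar> + \<bar>\<theta> j t - thb\<bar>) \<le> 2 * Q^2 * (2 * (C * exp (- g * t)))"
        by (intro mult_left_mono) auto
      then show ?thesis by (simp add: power2_norm_eq_inner)
    qed
    finally have X: "(v i t - v j t) \<bullet> (fr i t - fr j t) \<le> thb * ((v i t - v j t) \<bullet> (v i t - v j t)) + 4 * Q^2 * C * exp (- g * t)" .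
    have "m i * m j * ((v i t - v j t) \<bullet> (fr i t - fr j t)) \<le> m i * m j * (thb * ((v i t - v j t) \<bullet> (v i t - v j t)) + 4 * Q^2 * C * exp (- g * t))"
      by (rule mult_left_mono[OF X mm])
    then show "m i * m j * ((v i t - v j t) \<bullet> (fr i t - fr j t))
       \<le> thb * (m i * m j * ((v i t - v j t) \<bullet> (v i t - v j t))) + (m i * m j) * (4 * Q^2 * C * exp (- g * t))"
      by (simp add: algebra_simps)
  qed
  also have "\<dots> = thb * D2 t + (\<Sum>i<N. \<Sum>j<N. m i * m j) * (4 * Q^2 * C * exp (- g * t))"
    unfolding D2_def by (simp add: sum.distrib sum_distrib_left sum_distrib_right)
  also have "(\<Sum>i<N. \<Sum>j<N. m i * m j) = M^2"
    unfolding M_def by (simp add: sum_product[symmetric] power2_eq_square)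
  finally show ?thesis by (simp add: algebra_simps)
qed

lemma D2_conv: "\<exists>C g. C \<ge> 0 \<and> g > 0 \<and> (\<forall>t\<ge>0. D2 t \<le> C * exp (- g * t))"
proof -
  obtain Q where Q: "Q > 0" "\<forall>i<N. \<forall>t\<ge>0. norm (v i t) \<le> Q" using speed_bound by blast
  obtain C g where C: "C \<ge> 0" "g > 0" "\<forall>i<N. \<forall>t\<ge>0. \<bar>\<theta> i t - thb\<bar> \<le> C * exp (- g * t)"
    using theta_conv by blast
  define D' where "D' s = (\<Sum>i<N. \<Sum>j<N. m i * m j * ((v i s - v j s) \<bullet> (Fv i s - Fv j s) + (Fv i s - Fv j s) \<bullet> (v i s - v j s)))" for s
  have bound: "D' s \<le> - (2 * (M * phis - \<sigma> * thb)) * D2 s + (2 * \<sigma> * (4 * Q^2 * M^2 * C)) * exp (- g * s)"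
    if s: "s \<ge> 0" for s
  proof -
    have "D' s = 2 * ((\<Sum>i<N. \<Sum>j<N. m i * m j * ((v i s - v j s) \<bullet> (Al i s - Al j s)))
                 + \<sigma> * (\<Sum>i<N. \<Sum>j<N. m i * m j * ((v i s - v j s) \<bullet> (fr i s - fr j s))))"
    proof -
      have tw: "(v i s - v j s) \<bullet> (Fv i s - Fv j s) + (Fv i s - Fv j s) \<bullet> (v i s - v j s)
         = 2 * ((v i s - v j s) \<bullet> (Al i s - Al j s)) + 2 * \<sigma> * ((v i s - v j s) \<bullet> (fr i s - fr j s))" for i j
      proof -
        have "Fv i s - Fv j s = (Al i s - Al j s) + \<sigma> *\<^sub>R (fr i s - fr j s)"
          by (simp add: Fv_split algebra_simps scaleR_diff_right)
        then have e2: "(v i s - v j s) \<bullet> (Fv i s - Fv j s) = (v i s - v j s) \<bullet> (Al i s - Al j s) + \<sigma> * ((v i s - v j s) \<bullet> (fr i s - fr j s))"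
          by (simp add: inner_add_right)
        have e3: "(Fv i s - Fv j s) \<bullet> (v i s - v j s) = (v i s - v j s) \<bullet> (Fv i s - Fv j s)" by (rule inner_commute)
        show ?thesis using e2 e3 by linarith
      qed
      have gen: "(\<Sum>i<N. \<Sum>j<N. m i * m j * (2 * A i j + 2 * \<sigma> * B i j))
          = 2 * ((\<Sum>i<N. \<Sum>j<N. m i * m j * A i j) + \<sigma> * (\<Sum>i<N. \<Sum>j<N. m i * m j * B i j))" for A B
        by (simp add: sum.distrib sum_distrib_left algebra_simps)
      show ?thesis unfolding D'_def tw
        by (rule gen[of "\<lambda>i j. (v i s - v j s) \<bullet> (Al i s - Al j s)" "\<lambda>i j. (v i s - v j s) \<bullet> (fr i s - fr j s)"])
    qed
    also have "\<dots> \<le> 2 * (- (M * phis) * D2 s + \<sigma> * (thb * D2 s + 4 * Q^2 * M^2 * C * exp (- g * s)))"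
      using align_part[of s] fric_part[OF Q(2) C(3) s] \<sigma>_pos
      by (intro mult_left_mono add_mono) auto
    finally show ?thesis by (simp add: algebra_simps)
  qed
  show ?thesis
    by (rule gronwall_exp[where f'=D' and \<alpha>="2 * (M * phis - \<sigma> * thb)" and \<mu>=g
          and K="2 * \<sigma> * (4 * Q^2 * M^2 * C)"])
      (use D2_deriv bound cond' C \<sigma>_pos in \<open>auto simp: D'_def mult.commute\<close>)
qed

lemma vdiff: "\<exists>C g. C \<ge> 0 \<and> g > 0 \<and> (\<forall>i<N. \<forall>j<N. \<forall>t\<ge>0. norm (v i t - v j t) \<le> C * exp (- g * t))"
proof -
  obtain C g where C: "C \<ge> 0" "g > 0" "\<forall>t\<ge>0. D2 t \<le> C * exp (- g * t)" using D2_conv by blast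
  have "norm (v i t - v j t) \<le> sqrt (C / mmin^2) * exp (- (g/2) * t)" if i: "i < N" and j: "j < N" and t: "t \<ge> 0" for i j t
  proof -
    have "m i * m j * ((v i t - v j t) \<bullet> (v i t - v j t)) \<le> (\<Sum>j<N. m i * m j * ((v i t - v j t) \<bullet> (v i t - v j t)))"
      using j m_pos i by (intro member_le_sum) (auto intro!: mult_nonneg_nonneg intro: less_imp_le)
    also have "\<dots> \<le> D2 t" unfolding D2_def
      using i m_pos by (intro member_le_sum[where f="\<lambda>i. \<Sum>j<N. m i * m j * ((v i t - v j t) \<bullet> (v i t - v j t))"] sum_nonneg)
        (auto intro!: mult_nonneg_nonneg intro: less_imp_le)
    also have "\<dots> \<le> C * exp (- g * t)" using C t by auto
    finally have 1: "m i * m j * (norm (v i t - v j t))^2 \<le> C * exp (- g * t)" by (simp add: power2_norm_eq_inner)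
    have "mmin^2 * (norm (v i t - v j t))^2 \<le> m i * m j * (norm (v i t - v j t))^2"
    proof (intro mult_right_mono)
      have "mmin \<le> m i" "mmin \<le> m j" using mmin i j by auto
      then have "mmin * mmin \<le> m i * m j" using mmin(1) by (intro mult_mono) auto
      then show "mmin^2 \<le> m i * m j" by (simp add: power2_eq_square)
    qed simp
    then have "mmin^2 * (norm (v i t - v j t))^2 \<le> C * exp (- g * t)" using 1 by linarith
    then have "(norm (v i t - v j t))^2 \<le> C / mmin^2 * exp (- g * t)" using mmin(1) by (simp add: field_simps)
    from sq_bound[OF this] show ?thesis using C mmin by simp
  qed
  then have "sqrt (C / mmin^2) \<ge> 0 \<and> g/2 > 0 \<and> (\<forall>i<N. \<forall>j<N. \<forall>t\<ge>0. norm (v i t - v j t) \<le> sqrt (C / mmin^2) * exp (- (g/2) * t))"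
    using C by auto
  then show ?thesis by blast
qed

end


lemma exp_mono_rate: "c \<le> g \<Longrightarrow> t \<ge> 0 \<Longrightarrow> exp (- g * t) \<le> exp (- c * (t::real))"
  by (simp add: mult_right_mono)

lemma ev_small:
  fixes C g \<epsilon> :: real
  assumes "C \<ge> 0" "g > 0" "\<epsilon> > 0"
  shows "\<exists>T\<ge>0. \<forall>t\<ge>T. C * exp (- g * t) < \<epsilon>"
proof (cases "C = 0")
  case True then show ?thesis using assms by auto
next
  case False
  then have C: "C > 0" using assms by simp
  define T where "T = max 0 (ln (2 * C / \<epsilon>) / g)"
  have "C * exp (- g * t) < \<epsilon>" if t: "t \<ge> T" for t
  proof -
    have "g * t \<ge> ln (2 * C / \<epsilon>)"
      using t assms by (auto simp: T_def field_simps)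
    then have "exp (- g * t) \<le> exp (- ln (2 * C / \<epsilon>))" by simp
    also have "\<dots> = \<epsilon> / (2 * C)" using C assms by (simp add: exp_minus)
    finally have "C * exp (- g * t) \<le> C * (\<epsilon> / (2 * C))" using C by (intro mult_left_mono) auto
    also have "\<dots> = \<epsilon> / 2" using C by simp
    finally show ?thesis using assms by simp
  qed
  then show ?thesis by (intro exI[of _ T]) (auto simp: T_def)
qed

context csf
begin

definition "err t = Fv 0 t - (\<sigma> * (thb - norm (v 0 t) powr p)) *\<^sub>R v 0 t" for t

lemma err_eq: "err t = Al 0 t + (\<sigma> * (\<theta> 0 t - thb)) *\<^sub>R v 0 t"
  unfolding err_def Fv_split fr_def by (simp add: algebra_simps)

lemma err_bound: "\<exists>K c. K \<ge> 0 \<and> c > 0 \<and> (\<forall>t\<ge>0. norm (err t) \<le> K * exp (- c * t))"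
proof -
  obtain Q where Q: "Q > 0" "\<forall>i<N. \<forall>t\<ge>0. norm (v i t) \<le> Q" using speed_bound by blast
  obtain C1 g1 where C1: "C1 \<ge> 0" "g1 > 0" "\<forall>i<N. \<forall>t\<ge>0. \<bar>\<theta> i t - thb\<bar> \<le> C1 * exp (- g1 * t)"
    using theta_conv by blast
  obtain C2 g2 where C2: "C2 \<ge> 0" "g2 > 0" "\<forall>i<N. \<forall>j<N. \<forall>t\<ge>0. norm (v i t - v j t) \<le> C2 * exp (- g2 * t)"
    using vdiff by blast
  define c where "c = min g1 g2"
  have N0: "0 < N" using N by simp
  have "norm (err t) \<le> (M * \<phi> 0 * C2 + \<sigma> * C1 * Q) * exp (- c * t)" if t: "t \<ge> 0" for t
  proof -
    have e1: "exp (- g1 * t) \<le> exp (- c * t)" "exp (- g2 * t) \<le> exp (- c * t)"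
      using t by (auto simp: c_def intro!: exp_mono_rate mult_right_mono)
    have "norm (Al 0 t) \<le> (\<Sum>j<N. norm ((m j * \<phi> (norm (x 0 t - x j t))) *\<^sub>R (v j t - v 0 t)))"
      unfolding Al_def by (rule norm_sum)
    also have "\<dots> \<le> (\<Sum>j<N. m j * \<phi> 0 * (C2 * exp (- c * t)))"
    proof (rule sum_mono)
      fix j assume j: "j \<in> {..<N}"
      have a: "0 \<le> m j * \<phi> (norm (x 0 t - x j t))" "m j * \<phi> (norm (x 0 t - x j t)) \<le> m j * \<phi> 0"
        using m_pos[of j] j phi_pos phi_le0 by (auto intro: mult_left_mono less_imp_le)
      have b: "norm (v j t - v 0 t) \<le> C2 * exp (- c * t)"
        using C2(3) j N0 t e1 C2(1) by (meson lessThan_iff mult_left_mono order.trans)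
      show "norm ((m j * \<phi> (norm (x 0 t - x j t))) *\<^sub>R (v j t - v 0 t)) \<le> m j * \<phi> 0 * (C2 * exp (- c * t))"
        using a b by (simp add: mult_mono)
    qed
    also have "\<dots> = M * \<phi> 0 * C2 * exp (- c * t)" by (simp add: M_def sum_distrib_right mult.assoc)
    finally have A: "norm (Al 0 t) \<le> M * \<phi> 0 * C2 * exp (- c * t)" .
    have "norm ((\<sigma> * (\<theta> 0 t - thb)) *\<^sub>R v 0 t) = \<sigma> * \<bar>\<theta> 0 t - thb\<bar> * norm (v 0 t)"
      using \<sigma>_pos by (simp add: abs_mult)
    also have "\<dots> \<le> \<sigma> * (C1 * exp (- c * t)) * Q"
    proof (intro mult_mono mult_left_mono)
      show "\<bar>\<theta> 0 t - thb\<bar> \<le> C1 * exp (- c * t)"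
        using C1(3) N0 t e1 C1(1) by (meson mult_left_mono order.trans)
      show "norm (v 0 t) \<le> Q" using Q N0 t by simp
    qed (use \<sigma>_pos C1 in auto)
    finally have B: "norm ((\<sigma> * (\<theta> 0 t - thb)) *\<^sub>R v 0 t) \<le> \<sigma> * C1 * Q * exp (- c * t)" by (simp add: ac_simps)
    show ?thesis unfolding err_eq using A B norm_triangle_ineq[of "Al 0 t" "(\<sigma> * (\<theta> 0 t - thb)) *\<^sub>R v 0 t"]
      by (simp add: algebra_simps)
  qed
  moreover have "M * \<phi> 0 * C2 + \<sigma> * C1 * Q \<ge> 0"
    using M_pos phi_pos[of 0] C1 C2 Q \<sigma>_pos by simp
  moreover have "c > 0" using C1 C2 by (simp add: c_def)
  ultimately show ?thesis by blast
qed

end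


context csf
begin

definition "Z t = (\<Sum>i<N. m i * (e \<bullet> v i t))" for t

lemma Z_deriv: "t \<ge> 0 \<Longrightarrow> (Z has_real_derivative (\<Sum>i<N. e \<bullet> Fv i t * m i)) (at t within {0..})"
  unfolding Z_def by (rule derivative_eq_intros e_deriv refl | simp)+

lemma Z_deriv_eq: "(\<Sum>i<N. e \<bullet> Fv i t * m i) = \<sigma> * (\<Sum>i<N. m i * ((\<theta> i t - norm (v i t) powr p) * (e \<bullet> v i t)))"
proof -
  have tw: "e \<bullet> Fv i t * m i = (\<Sum>j<N. w t i j * ((v j t - v i t) \<bullet> e))
        + \<sigma> * (m i * ((\<theta> i t - norm (v i t) powr p) * (e \<bullet> v i t)))" for i
  proof -
    have "(\<Sum>j<N. (m j * \<phi> (norm (x i t - x j t))) * (e \<bullet> v j t - e \<bullet> v i t)) * m i = (\<Sum>j<N. w t i j * ((v j t - v i t) \<bullet> e))"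
      unfolding sum_distrib_right by (intro sum.cong refl) (simp add: w_def inner_diff_left inner_commute[of e] algebra_simps)
    then show ?thesis unfolding e_inner_Fv by (simp add: algebra_simps)
  qed
  have "(\<Sum>i<N. e \<bullet> Fv i t * m i) = (\<Sum>i<N. \<Sum>j<N. w t i j * ((v j t - v i t) \<bullet> e))
        + \<sigma> * (\<Sum>i<N. m i * ((\<theta> i t - norm (v i t) powr p) * (e \<bullet> v i t)))"
    unfolding tw by (simp add: sum.distrib sum_distrib_left)
  also have "(\<Sum>i<N. \<Sum>j<N. w t i j * ((v j t - v i t) \<bullet> e)) = 0"
    using sum_sym_inner[of N "w t" "\<lambda>i. v i t" "\<lambda>_. e"] w_sym by simp
  finally show ?thesis by simp
qed

lemma v0_Fv0: "v 0 t \<bullet> Fv 0 t = \<sigma> * (thb - norm (v 0 t) powr p) * (v 0 t \<bullet> v 0 t) + v 0 t \<bullet> err t"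
proof -
  have "Fv 0 t = (\<sigma> * (thb - norm (v 0 t) powr p)) *\<^sub>R v 0 t + err t" by (simp add: err_def)
  then show ?thesis by (simp add: inner_add_right)
qed

lemma lower: "\<exists>T \<rho>. T \<ge> 0 \<and> \<rho> > 0 \<and> (\<forall>t\<ge>T. norm (v 0 t) \<ge> \<rho>) \<and> \<rho> powr p \<le> thb / 4"
proof -
  obtain Q where Q: "Q > 0" "\<forall>i<N. \<forall>t\<ge>0. norm (v i t) \<le> Q" using speed_bound by blast
  obtain C1 g1 where C1: "C1 \<ge> 0" "g1 > 0" "\<forall>i<N. \<forall>t\<ge>0. \<bar>\<theta> i t - thb\<bar> \<le> C1 * exp (- g1 * t)"
    using theta_conv by blast
  obtain C2 g2 where C2: "C2 \<ge> 0" "g2 > 0" "\<forall>i<N. \<forall>j<N. \<forall>t\<ge>0. norm (v i t - v j t) \<le> C2 * exp (- g2 * t)"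
    using vdiff by blast
  obtain K c where K: "K \<ge> 0" "c > 0" "\<forall>t\<ge>0. norm (err t) \<le> K * exp (- c * t)" using err_bound by blast
  have N0: "0 < N" using N by simp
  define \<rho>0 where "\<rho>0 = (thb / 4) powr (1 / p)"
  have \<rho>0: "\<rho>0 > 0" "\<rho>0 powr p = thb / 4" using thb_pos p_pos by (auto simp: \<rho>0_def powr_powr)
  define r where "r = \<rho>0 / 2"
  have r: "r > 0" "r \<le> \<rho>0" using \<rho>0 by (auto simp: r_def)
  have rp: "r powr p \<le> thb / 4" using r \<rho>0 p_pos by (metis less_imp_le powr_mono2)
  obtain Ta where Ta: "Ta \<ge> 0" "\<forall>t\<ge>Ta. C1 * exp (- g1 * t) < thb / 4"
    using ev_small[OF C1(1,2), of "thb/4"] thb_pos by auto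
  obtain Tb where Tb: "Tb \<ge> 0" "\<forall>t\<ge>Tb. C2 * exp (- g2 * t) < \<rho>0 / 2"
    using ev_small[OF C2(1,2), of "\<rho>0/2"] \<rho>0 by auto
  obtain Tc where Tc: "Tc \<ge> 0" "\<forall>t\<ge>Tc. K * exp (- c * t) < (3/4) * \<sigma> * thb * r"
    using ev_small[OF K(1,2), of "(3/4) * \<sigma> * thb * r"] \<sigma>_pos thb_pos r by auto
  define T1 where "T1 = max Ta (max Tb Tc)"
  have T1: "T1 \<ge> 0" "T1 \<ge> Ta" "T1 \<ge> Tb" "T1 \<ge> Tc" using Ta by (auto simp: T1_def)
  have "\<exists>T2\<ge>T1. norm (v 0 T2) > r"
  proof (rule ccontr)
    assume "\<not> ?thesis"
    then have small: "\<And>t. t \<ge> T1 \<Longrightarrow> norm (v 0 t) \<le> r" by (meson not_less)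
    define b where "b = \<sigma> * thb / 2"
    have b: "b > 0" using \<sigma>_pos thb_pos by (simp add: b_def)
    have coef: "\<theta> i t - norm (v i t) powr p \<ge> thb / 2" if i: "i < N" and t: "t \<ge> T1" for i t
    proof -
      have "norm (v i t - v 0 t) \<le> C2 * exp (- g2 * t)" using C2 i N0 T1 t by simp
      moreover have "C2 * exp (- g2 * t) < \<rho>0 / 2" using Tb(2)[rule_format, of t] T1 t by linarith
      ultimately have "norm (v i t - v 0 t) < \<rho>0 / 2" by linarith
      then have "norm (v i t) \<le> \<rho>0" using small[OF t] norm_triangle_ineq2[of "v i t" "v 0 t"] by (simp add: r_def)
      then have "norm (v i t) powr p \<le> \<rho>0 powr p" using p_pos by (intro powr_mono2) auto
      moreover have "\<bar>\<theta> i t - thb\<bar> \<le> C1 * exp (- g1 * t)" using C1 i T1 t by simp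
      moreover have "C1 * exp (- g1 * t) < thb / 4" using Ta(2)[rule_format, of t] T1 t by linarith
      ultimately show ?thesis using \<rho>0 by linarith
    qed
    have Zd: "((\<lambda>t. Z t * exp (- b * t)) has_real_derivative
               ((\<Sum>i<N. e \<bullet> Fv i t * m i) * exp (- b * t) + (- b * exp (- b * t)) * Z t)) (at t within {T1..})"
      if t: "t \<ge> T1" for t
    proof -
      have t0: "t \<ge> 0" using t T1 by simp
      have dZ: "(Z has_real_derivative (\<Sum>i<N. e \<bullet> Fv i t * m i)) (at t within {T1..})"
        by (rule DERIV_subset[OF Z_deriv[OF t0]]) (use T1 in auto)
      have dE: "((\<lambda>t. exp (- b * t)) has_real_derivative (- b * exp (- b * t))) (at t within {T1..})"
        by (auto intro!: derivative_eq_intros)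
      show ?thesis by (rule DERIV_mult[OF dZ dE])
    qed
    have Zdn: "((\<Sum>i<N. e \<bullet> Fv i t * m i) * exp (- b * t) + (- b * exp (- b * t)) * Z t) \<ge> 0"
      if t: "t \<ge> T1" for t
    proof -
      have "(\<Sum>i<N. e \<bullet> Fv i t * m i) \<ge> \<sigma> * (\<Sum>i<N. m i * ((thb / 2) * (e \<bullet> v i t)))"
        unfolding Z_deriv_eq
      proof (rule mult_left_mono, rule sum_mono)
        fix i assume i: "i \<in> {..<N}"
        have "e \<bullet> v i t > 0" using sector i t T1 by auto
        then show "m i * ((thb / 2) * (e \<bullet> v i t)) \<le> m i * ((\<theta> i t - norm (v i t) powr p) * (e \<bullet> v i t))"
          using coef[of i t] i t m_pos[of i] by (intro mult_left_mono mult_right_mono) auto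
      qed (use \<sigma>_pos in auto)
      also have "\<sigma> * (\<Sum>i<N. m i * ((thb / 2) * (e \<bullet> v i t))) = b * Z t"
        by (simp add: Z_def b_def sum_distrib_left algebra_simps)
      finally have "(\<Sum>i<N. e \<bullet> Fv i t * m i) - b * Z t \<ge> 0" by simp
      then have "((\<Sum>i<N. e \<bullet> Fv i t * m i) - b * Z t) * exp (- b * t) \<ge> 0" by simp
      then show ?thesis by (simp add: algebra_simps)
    qed
    have grow: "Z t \<ge> Z T1 * exp (b * (t - T1))" if t: "t \<ge> T1" for t
    proof -
      have "Z T1 * exp (- b * T1) \<le> Z t * exp (- b * t)"
        by (rule mono_deriv[OF Zd Zdn]) (use t in auto)
      then have "Z T1 * exp (- b * T1) * exp (b * t) \<le> Z t * exp (- b * t) * exp (b * t)"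
        by (intro mult_right_mono) auto
      also have "Z t * exp (- b * t) * exp (b * t) = Z t" by (simp add: exp_minus)
      also have "Z T1 * exp (- b * T1) * exp (b * t) = Z T1 * exp (b * (t - T1))"
        by (simp add: mult.assoc exp_add[symmetric] algebra_simps)
      finally show ?thesis .
    qed
    have ZT1: "Z T1 > 0" unfolding Z_def
      using N0 T1 sector m_pos by (intro sum_pos) auto
    have Zbd: "Z t \<le> M * Q" if t: "t \<ge> T1" for t
    proof -
      have "Z t \<le> (\<Sum>i<N. m i * Q)" unfolding Z_def
      proof (rule sum_mono)
        fix i assume i: "i \<in> {..<N}"
        have "e \<bullet> v i t \<le> norm e * norm (v i t)" by (rule norm_cauchy_schwarz)
        also have "\<dots> \<le> Q" using e_norm Q i t T1 by simp
        finally show "m i * (e \<bullet> v i t) \<le> m i * Q" using m_pos[of i] i by (intro mult_left_mono) auto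
      qed
      then show ?thesis by (simp add: M_def sum_distrib_right)
    qed
    define ts where "ts = T1 + (M * Q / Z T1) / b"
    have ts: "ts \<ge> T1" using M_pos Q ZT1 b by (simp add: ts_def)
    have "exp (b * (ts - T1)) \<ge> 1 + M * Q / Z T1"
      using exp_ge_add_one_self[of "b * (ts - T1)"] b by (simp add: ts_def)
    then have "Z T1 * exp (b * (ts - T1)) \<ge> Z T1 * (1 + M * Q / Z T1)"
      using ZT1 by (intro mult_left_mono) auto
    also have "Z T1 * (1 + M * Q / Z T1) = Z T1 + M * Q" using ZT1 by (simp add: field_simps)
    finally have "Z ts \<ge> Z T1 + M * Q" using grow[OF ts] by linarith
    with Zbd[OF ts] ZT1 show False by linarith
  qed
  then obtain T2 where T2: "T2 \<ge> T1" "norm (v 0 T2) > r" by blast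
  define G where "G i t = v 0 t \<bullet> v 0 t - r^2" for i :: nat and t
  define G' where "G' i t = v 0 t \<bullet> Fv 0 t + Fv 0 t \<bullet> v 0 t" for i :: nat and t
  have Gpos: "G 0 t > 0" if t: "t \<ge> T2" for t
  proof (rule barrier[of 1 T2 G G'])
    show "(G i has_real_derivative G' i t) (at t within {T2..})" if "i < 1" "t \<ge> T2" for i t
    proof -
      have t0: "t \<ge> 0" using that T2 T1 by simp
      have "((\<lambda>t. v 0 t \<bullet> v 0 t) has_real_derivative G' i t) (at t within {0..})"
        unfolding G'_def using inner_deriv[OF dv[OF N0 t0] dv[OF N0 t0]] by simp
      then have "((\<lambda>t. v 0 t \<bullet> v 0 t) has_real_derivative G' i t) (at t within {T2..})"
        by (rule DERIV_subset) (use T2 T1 in auto)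
      then show ?thesis unfolding G_def by (rule derivative_eq_intros) auto
    qed
    show "G i T2 > 0" if "i < 1" for i
      using T2 r unfolding G_def by (simp add: power2_norm_eq_inner[symmetric] power_strict_mono)
    fix i t assume i: "i < (1::nat)" and t: "t > T2" and g0: "G i t = 0"
    have t0: "t \<ge> 0" "t \<ge> Tc" using t T2 T1 by auto
    have nv: "norm (v 0 t) = r" using g0 r unfolding G_def
      by (metis power2_norm_eq_inner eq_iff_diff_eq_0 norm_ge_zero power2_eq_iff_nonneg less_imp_le)
    have "v 0 t \<bullet> err t \<ge> - (norm (v 0 t) * norm (err t))"
      using norm_cauchy_schwarz[of "- v 0 t" "err t"] by simp
    moreover have "norm (err t) \<le> K * exp (- c * t)" using K t0 by simp
    then have "norm (v 0 t) * norm (err t) \<le> r * (K * exp (- c * t))" unfolding nv using r by (intro mult_left_mono) auto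
    moreover have "K * exp (- c * t) < (3/4) * \<sigma> * thb * r" using Tc t0 by simp
    then have "r * (K * exp (- c * t)) < r * ((3/4) * \<sigma> * thb * r)" using r by (intro mult_strict_left_mono) auto
    ultimately have e1: "v 0 t \<bullet> err t > - ((3/4) * \<sigma> * thb * r * r)"
      by (simp add: algebra_simps)
    have "\<sigma> * (thb - norm (v 0 t) powr p) \<ge> \<sigma> * ((3/4) * thb)"
      using nv rp \<sigma>_pos by (intro mult_left_mono) auto
    then have e2: "\<sigma> * (thb - norm (v 0 t) powr p) * (v 0 t \<bullet> v 0 t) \<ge> \<sigma> * ((3/4) * thb) * (r * r)"
    proof -
      have vv: "v 0 t \<bullet> v 0 t = r * r" using nv by (simp add: power2_norm_eq_inner[symmetric] power2_eq_square)
      show ?thesis unfolding vv by (rule mult_right_mono[OF \<open>\<sigma> * (thb - norm (v 0 t) powr p) \<ge> \<sigma> * ((3/4) * thb)\<close>]) simp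
    qed
    have "v 0 t \<bullet> Fv 0 t > 0" using v0_Fv0[of t] e1 e2 by (simp add: algebra_simps)
    then show "G' i t > 0" unfolding G'_def by (simp add: inner_commute)
  qed (use t in auto)
  have "norm (v 0 t) \<ge> r" if t: "t \<ge> T2" for t
  proof -
    have "r^2 < (norm (v 0 t))^2" using Gpos[OF t] unfolding G_def by (simp add: power2_norm_eq_inner)
    then have "r < norm (v 0 t)" by (rule power_less_imp_less_base) simp
    then show ?thesis by simp
  qed
  then show ?thesis using T2 T1 r rp by (intro exI[of _ T2] exI[of _ r]) auto
qed

end


lemma amgm: "(l::real) > 0 \<Longrightarrow> 2 * a * b \<le> l * a^2 + b^2 / l"
proof -
  assume l: "l > 0"
  have h: "(l*a^2 + b^2/l) - 2*a*b = (l*a - b)^2 / l" using l by (simp add: field_simps power2_eq_square)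
  have "(l*a - b)^2 / l \<ge> 0" using l by simp
  then show ?thesis using h by linarith
qed

lemma norm_powr_inner: "norm (v::'b::real_inner) powr p = (v \<bullet> v) powr (p/2)"
proof -
  have "norm v = (v \<bullet> v) powr (1/2)" by (simp add: norm_eq_sqrt_inner powr_half_sqrt)
  then show ?thesis by (simp add: powr_powr)
qed

context csf
begin

lemma qconv: "\<exists>T C g. T \<ge> 0 \<and> C \<ge> 0 \<and> g > 0 \<and> (\<forall>t\<ge>T. \<bar>norm (v 0 t) powr p - thb\<bar> \<le> C * exp (- g * t))"
proof -
  obtain T \<rho> where T: "T \<ge> 0" "\<rho> > 0" "\<forall>t\<ge>T. norm (v 0 t) \<ge> \<rho>" using lower by blast
  obtain Q where Q: "Q > 0" "\<forall>i<N. \<forall>t\<ge>0. norm (v i t) \<le> Q" using speed_bound by blast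
  obtain K c where K: "K \<ge> 0" "c > 0" "\<forall>t\<ge>0. norm (err t) \<le> K * exp (- c * t)" using err_bound by blast
  have N0: "0 < N" using N by simp
  define s where "s t = v 0 t \<bullet> v 0 t" for t
  define q where "q t = s t powr (p/2)" for t
  have qn: "q t = norm (v 0 t) powr p" for t unfolding q_def s_def by (simp add: norm_powr_inner)
  have nv: "norm (v 0 t) \<ge> \<rho>" "norm (v 0 t) \<le> Q" "norm (v 0 t) > 0" if "t \<ge> T" for t
    using T Q that N0 by (auto intro: less_le_trans)
  have spos: "s t > 0" if "t \<ge> T" for t
    using nv[OF that] unfolding s_def by (simp add: power2_norm_eq_inner[symmetric])
  define q' where "q' t = (p/2 * s t powr (p/2 - 1)) * (v 0 t \<bullet> Fv 0 t + Fv 0 t \<bullet> v 0 t)" for t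
  have dq: "(q has_real_derivative q' t) (at t within {T..})" if t: "t \<ge> T" for t
  proof -
    have t0: "t \<ge> 0" using t T by simp
    have "(s has_real_derivative (v 0 t \<bullet> Fv 0 t + Fv 0 t \<bullet> v 0 t)) (at t within {0..})"
      unfolding s_def using inner_deriv[OF dv[OF N0 t0] dv[OF N0 t0]] by simp
    then have ds: "(s has_real_derivative (v 0 t \<bullet> Fv 0 t + Fv 0 t \<bullet> v 0 t)) (at t within {T..})"
      by (rule DERIV_subset) (use T in auto)
    show ?thesis unfolding q_def q'_def
      by (rule DERIV_chain2[OF has_real_derivative_powr[OF spos[OF t]] ds])
  qed
  define e3 where "e3 t = p * s t powr (p/2 - 1) * (v 0 t \<bullet> err t)" for t
  have q'id: "q' t = p * \<sigma> * (thb - q t) * q t + e3 t" if t: "t \<ge> T" for t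
  proof -
    have vF: "v 0 t \<bullet> Fv 0 t = \<sigma> * (thb - q t) * s t + v 0 t \<bullet> err t"
      using v0_Fv0[of t] by (simp add: qn s_def)
    have ss: "s t powr (p/2 - 1) * s t = q t"
    proof -
      have "s t powr (p/2 - 1) * s t = s t powr (p/2 - 1) * s t powr 1" using spos[OF t] by simp
      also have "\<dots> = s t powr (p/2 - 1 + 1)" by (rule powr_add[symmetric])
      finally show ?thesis by (simp add: q_def)
    qed
    have "q' t = p * s t powr (p/2 - 1) * (v 0 t \<bullet> Fv 0 t)" unfolding q'_def by (simp add: inner_commute)
    also have "\<dots> = p * \<sigma> * (thb - q t) * (s t powr (p/2 - 1) * s t) + e3 t"
      unfolding vF e3_def by (simp add: algebra_simps)
    finally show ?thesis unfolding ss .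
  qed
  define K3 where "K3 = p * (\<rho> powr (p - 1) + Q powr (p - 1)) * K"
  have K3: "K3 \<ge> 0" using p_pos K by (simp add: K3_def)
  have e3b: "\<bar>e3 t\<bar> \<le> K3 * exp (- c * t)" if t: "t \<ge> T" for t
  proof -
    have t0: "t \<ge> 0" using t T by simp
    have n0: "norm (v 0 t) > 0" using nv[OF t] by simp
    have sp: "s t powr (p/2 - 1) * norm (v 0 t) = norm (v 0 t) powr (p - 1)"
    proof -
      have "s t = norm (v 0 t) powr 2" using n0 by (simp add: s_def power2_norm_eq_inner[symmetric] powr_realpow)
      then have "s t powr (p/2 - 1) = (norm (v 0 t) powr 2) powr (p/2 - 1)" by (simp only:)
      also have "\<dots> = norm (v 0 t) powr (2 * (p/2 - 1))" by (rule powr_powr)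
      also have "2 * (p/2 - 1) = p - 2" by simp
      finally have "s t powr (p/2 - 1) = norm (v 0 t) powr (p - 2)" .
      then have "s t powr (p/2 - 1) * norm (v 0 t) = norm (v 0 t) powr (p - 2) * norm (v 0 t) powr 1"
        using n0 by simp
      also have "\<dots> = norm (v 0 t) powr (p - 2 + 1)" by (rule powr_add[symmetric])
      also have "p - 2 + 1 = p - 1" by simp
      finally show ?thesis .
    qed
    have "\<bar>e3 t\<bar> = p * s t powr (p/2 - 1) * \<bar>v 0 t \<bullet> err t\<bar>"
      unfolding e3_def using p_pos by (simp add: abs_mult)
    also have "\<dots> \<le> p * s t powr (p/2 - 1) * (norm (v 0 t) * norm (err t))"
      using p_pos by (intro mult_left_mono) (auto simp: Cauchy_Schwarz_ineq2)
    also have "\<dots> = p * norm (v 0 t) powr (p - 1) * norm (err t)" using sp by (simp add: algebra_simps)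
    also have "\<dots> \<le> p * (\<rho> powr (p - 1) + Q powr (p - 1)) * (K * exp (- c * t))"
    proof (intro mult_mono mult_left_mono)
      show "norm (v 0 t) powr (p - 1) \<le> \<rho> powr (p - 1) + Q powr (p - 1)"
        using nv[OF t] T by (intro powr_between) auto
      show "norm (err t) \<le> K * exp (- c * t)" using K t0 by simp
    qed (use p_pos in auto)
    finally show ?thesis by (simp add: K3_def algebra_simps)
  qed
  define lam where "lam = p * \<sigma> * \<rho> powr p"
  have lam: "lam > 0" using p_pos \<sigma>_pos T by (simp add: lam_def)
  define E where "E t = (q t - thb)^2" for t
  define E' where "E' t = 2 * (q t - thb) * q' t" for t
  have dE: "(E has_real_derivative E' t) (at t within {T..})" if t: "t \<ge> T" for t
    unfolding E_def E'_def by (rule derivative_eq_intros dq[OF t] refl | simp)+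
  have Eb: "E' t \<le> - lam * E t + (K3^2 / lam) * exp (- (2 * c) * t)" if t: "t \<ge> T" for t
  proof -
    have qlo: "q t \<ge> \<rho> powr p" unfolding qn using nv[OF t] T p_pos by (intro powr_mono2) auto
    have "E' t = - 2 * (p * \<sigma> * q t) * (q t - thb)^2 + 2 * (q t - thb) * e3 t"
      unfolding E'_def q'id[OF t] by (simp add: power2_eq_square algebra_simps)
    also have "- 2 * (p * \<sigma> * q t) * (q t - thb)^2 \<le> - 2 * lam * (q t - thb)^2"
    proof -
      have "lam \<le> p * \<sigma> * q t" unfolding lam_def using qlo p_pos \<sigma>_pos by (intro mult_left_mono) auto
      then show ?thesis by (intro mult_right_mono) auto
    qed
    also have "2 * (q t - thb) * e3 t \<le> 2 * \<bar>q t - thb\<bar> * \<bar>e3 t\<bar>"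
    proof -
      have "(q t - thb) * e3 t \<le> \<bar>(q t - thb) * e3 t\<bar>" by (rule abs_ge_self)
      then have "(q t - thb) * e3 t \<le> \<bar>q t - thb\<bar> * \<bar>e3 t\<bar>" by (simp add: abs_mult)
      then have "2 * ((q t - thb) * e3 t) \<le> 2 * (\<bar>q t - thb\<bar> * \<bar>e3 t\<bar>)" by linarith
      then show ?thesis by (simp only: mult.assoc)
    qed
    also have "\<dots> \<le> lam * \<bar>q t - thb\<bar>^2 + \<bar>e3 t\<bar>^2 / lam" by (rule amgm[OF lam])
    also have "\<bar>e3 t\<bar>^2 \<le> (K3 * exp (- c * t))^2"
      using e3b[OF t] by (intro power_mono) auto
    also have "(K3 * exp (- c * t))^2 = K3^2 * exp (- (2 * c) * t)"
      by (simp add: power_mult_distrib power2_eq_square exp_add[symmetric])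
    finally show ?thesis using lam by (simp add: E_def divide_right_mono algebra_simps)
  qed
  obtain CE \<nu> where CE: "CE \<ge> 0" "\<nu> > 0" "\<forall>t\<ge>T. E t \<le> CE * exp (- \<nu> * t)"
    using gronwall_exp[OF dE Eb lam _ _ T(1)] K lam K3 by auto
  have "\<bar>norm (v 0 t) powr p - thb\<bar> \<le> sqrt CE * exp (- (\<nu>/2) * t)" if t: "t \<ge> T" for t
    using sq_bound[of "q t - thb" CE \<nu> t] CE t unfolding E_def qn by auto
  then show ?thesis using T CE by (intro exI[of _ T] exI[of _ "sqrt CE"] exI[of _ "\<nu>/2"]) auto
qed

end


context csf
begin

lemma Fv0_bound: "\<exists>T C g. T \<ge> 0 \<and> C \<ge> 0 \<and> g > 0 \<and> (\<forall>t\<ge>T. norm (Fv 0 t) \<le> C * exp (- g * t))"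
proof -
  obtain T Cq gq where T: "T \<ge> 0" "Cq \<ge> 0" "gq > 0" "\<forall>t\<ge>T. \<bar>norm (v 0 t) powr p - thb\<bar> \<le> Cq * exp (- gq * t)"
    using qconv by blast
  obtain Q where Q: "Q > 0" "\<forall>i<N. \<forall>t\<ge>0. norm (v i t) \<le> Q" using speed_bound by blast
  obtain K c where K: "K \<ge> 0" "c > 0" "\<forall>t\<ge>0. norm (err t) \<le> K * exp (- c * t)" using err_bound by blast
  have N0: "0 < N" using N by simp
  define g where "g = min gq c"
  have "norm (Fv 0 t) \<le> (\<sigma> * Cq * Q + K) * exp (- g * t)" if t: "t \<ge> T" for t
  proof -
    have t0: "t \<ge> 0" using t T by simp
    have e1: "exp (- gq * t) \<le> exp (- g * t)" "exp (- c * t) \<le> exp (- g * t)"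
      using t0 by (auto simp: g_def intro!: exp_mono_rate mult_right_mono)
    have eq: "Fv 0 t = (\<sigma> * (thb - norm (v 0 t) powr p)) *\<^sub>R v 0 t + err t" by (simp add: err_def)
    have "norm (Fv 0 t) \<le> norm ((\<sigma> * (thb - norm (v 0 t) powr p)) *\<^sub>R v 0 t) + norm (err t)"
      unfolding eq by (rule norm_triangle_ineq)
    also have "norm ((\<sigma> * (thb - norm (v 0 t) powr p)) *\<^sub>R v 0 t) = \<sigma> * \<bar>norm (v 0 t) powr p - thb\<bar> * norm (v 0 t)"
      using \<sigma>_pos by (simp add: abs_mult abs_minus_commute)
    also have "\<dots> \<le> \<sigma> * (Cq * exp (- g * t)) * Q"
    proof (intro mult_mono mult_left_mono)
      show "\<bar>norm (v 0 t) powr p - thb\<bar> \<le> Cq * exp (- g * t)"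
        using T(4) t e1 T(2) by (meson mult_left_mono order.trans)
      show "norm (v 0 t) \<le> Q" using Q N0 t0 by simp
    qed (use \<sigma>_pos T in auto)
    also have "norm (err t) \<le> K * exp (- g * t)"
      using K t0 e1 by (meson mult_left_mono order.trans)
    finally show ?thesis by (simp add: algebra_simps)
  qed
  moreover have "\<sigma> * Cq * Q + K \<ge> 0" using \<sigma>_pos T Q K by simp
  moreover have "g > 0" using T K by (simp add: g_def)
  ultimately have "T \<ge> 0 \<and> \<sigma> * Cq * Q + K \<ge> 0 \<and> g > 0 \<and> (\<forall>t\<ge>T. norm (Fv 0 t) \<le> (\<sigma> * Cq * Q + K) * exp (- g * t))"
    using T by auto
  then show ?thesis by blast
qed

lemma v0_incr:
  assumes C: "C \<ge> 0" and g: "g > 0" and T: "T \<ge> 0" and b: "\<forall>t\<ge>T. norm (Fv 0 t) \<le> C * exp (- g * t)"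
    and s: "T \<le> s" and st: "s \<le> t"
  shows "norm (v 0 t - v 0 s) \<le> (C / g) * exp (- g * s)"
proof (cases "v 0 t = v 0 s")
  case True then show ?thesis using C g by simp
next
  case False
  have N0: "0 < N" using N by simp
  define w where "w = (1 / norm (v 0 t - v 0 s)) *\<^sub>R (v 0 t - v 0 s)"
  have nw: "norm w = 1" using False by (simp add: w_def)
  define f where "f \<tau> = - (w \<bullet> v 0 \<tau>) - (C / g) * exp (- g * \<tau>)" for \<tau>
  define f' where "f' \<tau> = - (w \<bullet> Fv 0 \<tau>) - (C / g) * (- g * exp (- g * \<tau>))" for \<tau>
  have df: "(f has_real_derivative f' \<tau>) (at \<tau> within {s..})" if "\<tau> \<ge> s" for \<tau>
  proof -
    have t0: "\<tau> \<ge> 0" using that s T by simp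
    have "((\<lambda>\<tau>. w \<bullet> v 0 \<tau>) has_real_derivative w \<bullet> Fv 0 \<tau>) (at \<tau> within {0..})"
      using inner_deriv[OF has_vector_derivative_const dv[OF N0 t0], of w] by simp
    then have "((\<lambda>\<tau>. w \<bullet> v 0 \<tau>) has_real_derivative w \<bullet> Fv 0 \<tau>) (at \<tau> within {s..})"
      by (rule DERIV_subset) (use s T in auto)
    moreover have dE: "((\<lambda>\<tau>. exp (- g * \<tau>)) has_real_derivative (- g * exp (- g * \<tau>))) (at \<tau> within {s..})"
      by (auto intro!: derivative_eq_intros)
    ultimately show ?thesis unfolding f_def f'_def
      by (intro DERIV_diff DERIV_minus DERIV_cmult)
  qed
  have f'nn: "f' \<tau> \<ge> 0" if "\<tau> \<ge> s" for \<tau>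
  proof -
    have "w \<bullet> Fv 0 \<tau> \<le> norm w * norm (Fv 0 \<tau>)" by (rule norm_cauchy_schwarz)
    also have "\<dots> \<le> C * exp (- g * \<tau>)" using nw b that s by simp
    finally show ?thesis using g by (simp add: f'_def)
  qed
  have "f s \<le> f t" by (rule mono_deriv[OF df f'nn]) (use st in auto)
  then have "w \<bullet> (v 0 t - v 0 s) \<le> (C / g) * exp (- g * s) - (C / g) * exp (- g * t)"
    by (simp add: f_def inner_diff_right)
  also have "\<dots> \<le> (C / g) * exp (- g * s)" using C g by simp
  also have "w \<bullet> (v 0 t - v 0 s) = norm (v 0 t - v 0 s)"
    using False by (simp add: w_def power2_norm_eq_inner[symmetric] power2_eq_square)
  finally show ?thesis .
qed

lemma v0_conv: "\<exists>vbar C g T. T \<ge> 0 \<and> C \<ge> 0 \<and> g > 0 \<and> (\<forall>t\<ge>T. norm (v 0 t - vbar) \<le> C * exp (- g * t))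
    \<and> norm vbar = thb powr (1/p)"
proof -
  obtain T C g where T: "T \<ge> 0" "C \<ge> 0" "g > 0" "\<forall>t\<ge>T. norm (Fv 0 t) \<le> C * exp (- g * t)"
    using Fv0_bound by blast
  obtain Tq Cq gq where Tq: "Tq \<ge> 0" "Cq \<ge> 0" "gq > 0" "\<forall>t\<ge>Tq. \<bar>norm (v 0 t) powr p - thb\<bar> \<le> Cq * exp (- gq * t)"
    using qconv by blast
  obtain Tl \<rho> where Tl: "Tl \<ge> 0" "\<rho> > 0" "\<forall>t\<ge>Tl. norm (v 0 t) \<ge> \<rho>" using lower by blast
  have inc: "norm (v 0 t - v 0 s) \<le> (C / g) * exp (- g * s)" if "T \<le> s" "s \<le> t" for s t
    by (rule v0_incr[OF T(2,3,1,4) that])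
  define X where "X n = v 0 (T + real n)" for n
  have "Cauchy X"
  proof (rule CauchyI)
    fix \<epsilon> :: real assume \<epsilon>: "\<epsilon> > 0"
    obtain T' where T': "T' \<ge> 0" "\<forall>t\<ge>T'. (2 * (C / g)) * exp (- g * t) < \<epsilon>"
      using ev_small[of "2 * (C / g)" g \<epsilon>] T \<epsilon> by auto
    define M where "M = nat \<lceil>T'\<rceil>"
    have "norm (X m - X n) < \<epsilon>" if "m \<ge> M" "n \<ge> M" for m n
    proof -
      define s0 where "s0 = T + real M"
      have s0: "s0 \<ge> T" "s0 \<ge> T'" using T real_nat_ceiling_ge[of T'] by (auto simp: s0_def M_def)
      have "norm (X m - v 0 s0) \<le> (C / g) * exp (- g * s0)"
        unfolding X_def using that s0 by (intro inc) (auto simp: s0_def)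
      moreover have "norm (X n - v 0 s0) \<le> (C / g) * exp (- g * s0)"
        unfolding X_def using that s0 by (intro inc) (auto simp: s0_def)
      moreover have "norm (X m - X n) \<le> norm (X m - v 0 s0) + norm (X n - v 0 s0)"
        using norm_triangle_ineq4[of "X m - v 0 s0" "X n - v 0 s0"] by simp
      moreover have "(2 * (C / g)) * exp (- g * s0) < \<epsilon>" using T' s0 by simp
      ultimately show ?thesis by simp
    qed
    then show "\<exists>M. \<forall>m\<ge>M. \<forall>n\<ge>M. norm (X m - X n) < \<epsilon>" by blast
  qed
  then obtain vbar where lim: "X \<longlonglongrightarrow> vbar" by (auto simp: Cauchy_convergent_iff convergent_def)
  have bd: "norm (v 0 t - vbar) \<le> (C / g) * exp (- g * t)" if t: "t \<ge> T" for t
  proof (rule LIMSEQ_le_const2)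
    show "(\<lambda>n. norm (v 0 t - X n)) \<longlonglongrightarrow> norm (v 0 t - vbar)" by (intro tendsto_intros lim)
    show "\<exists>N. \<forall>n\<ge>N. norm (v 0 t - X n) \<le> C / g * exp (- g * t)"
    proof (intro exI allI impI)
      fix n assume n: "n \<ge> nat \<lceil>t\<rceil>"
      have "real n \<ge> t" using n real_nat_ceiling_ge[of t] of_nat_le_iff[of "nat \<lceil>t\<rceil>" n] by linarith
      then have "T + real n \<ge> t" using T by simp
      then have "norm (v 0 (T + real n) - v 0 t) \<le> C / g * exp (- g * t)" by (rule inc[OF t])
      then show "norm (v 0 t - X n) \<le> C / g * exp (- g * t)"
        unfolding X_def by (simp add: norm_minus_commute)
    qed
  qed
  have nlim: "(\<lambda>n. norm (X n)) \<longlonglongrightarrow> norm vbar" by (intro tendsto_intros lim)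
  have "norm vbar \<ge> \<rho>"
  proof (rule LIMSEQ_le_const[OF nlim])
    show "\<exists>N. \<forall>n\<ge>N. \<rho> \<le> norm (X n)"
    proof (intro exI allI impI)
      fix n assume n: "n \<ge> nat \<lceil>Tl\<rceil>"
      have "real n \<ge> Tl" using n real_nat_ceiling_ge[of Tl] of_nat_le_iff[of "nat \<lceil>Tl\<rceil>" n] by linarith
      then show "\<rho> \<le> norm (X n)" unfolding X_def using Tl T by simp
    qed
  qed
  then have nz: "norm vbar \<noteq> 0" using Tl by auto
  have l1: "(\<lambda>n. norm (X n) powr p) \<longlonglongrightarrow> norm vbar powr p"
    by (rule tendsto_powr[OF nlim tendsto_const nz])
  have l2: "(\<lambda>n. norm (X n) powr p) \<longlonglongrightarrow> thb"
  proof (rule LIMSEQ_I)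
    fix r :: real assume r: "r > 0"
    obtain T'' where T'': "T'' \<ge> 0" "\<forall>t\<ge>T''. Cq * exp (- gq * t) < r"
      using ev_small[OF Tq(2,3) r] by auto
    have "norm (norm (X n) powr p - thb) < r" if n: "n \<ge> nat \<lceil>max T'' Tq\<rceil>" for n
    proof -
      have "real n \<ge> max T'' Tq" using n real_nat_ceiling_ge[of "max T'' Tq"] of_nat_le_iff[of "nat \<lceil>max T'' Tq\<rceil>" n] by linarith
      then have tt: "T + real n \<ge> T''" "T + real n \<ge> Tq" using T by auto
      have "\<bar>norm (X n) powr p - thb\<bar> \<le> Cq * exp (- gq * (T + real n))" unfolding X_def using Tq tt by simp
      also have "\<dots> < r" using T'' tt by simp
      finally show ?thesis by simp
    qed
    then show "\<exists>no. \<forall>n\<ge>no. norm (norm (X n) powr p - thb) < r" by blast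
  qed
  have "norm vbar powr p = thb" using LIMSEQ_unique[OF l1 l2] .
  then have "thb powr (1/p) = (norm vbar powr p) powr (1/p)" by simp
  also have "\<dots> = norm vbar powr (p * (1/p))" by (rule powr_powr)
  also have "\<dots> = norm vbar" using p_pos nz by simp
  finally have nv: "norm vbar = thb powr (1/p)" by simp
  have "T \<ge> 0 \<and> C / g \<ge> 0 \<and> g > 0 \<and> (\<forall>t\<ge>T. norm (v 0 t - vbar) \<le> (C / g) * exp (- g * t)) \<and> norm vbar = thb powr (1/p)"
    using T bd nv by simp
  then show ?thesis by blast
qed

end


theorem mainTheorem8:
  fixes N :: nat and m :: "nat \<Rightarrow> real" and \<sigma> p \<kappa> :: real and \<phi> :: "real \<Rightarrow> real"
    and x v :: "nat \<Rightarrow> real \<Rightarrow> 'a::euclidean_space" and \<theta> :: "nat \<Rightarrow> real \<Rightarrow> real"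
  assumes N: "N \<ge> 1"
    and m_pos: "\<forall>i<N. m i > 0"
    and \<sigma>_pos: "\<sigma> > 0" and p_pos: "p > 0" and \<kappa>_pos: "\<kappa> > 0"
    and kernel: "comm_kernel \<phi>"
    and phi_star_pos: "(INF r\<in>{0..}. \<phi> r) > 0"
    and cond: "(INF r\<in>{0..}. \<phi> r) * (\<Sum>i<N. m i) >
               \<sigma> * ((\<Sum>i<N. m i * \<theta> i 0) / (\<Sum>i<N. m i))"
    and sol: "CSF_solution N m \<sigma> p \<kappa> \<phi> x v \<theta>"
    and theta0: "\<forall>i<N. \<theta> i 0 > 0"
    and sectorial: "\<exists>e::'a. norm e = 1 \<and> (\<forall>i<N. e \<bullet> v i 0 > 0)"
  shows "\<not> (\<forall>i<N. (v i \<longlongrightarrow> 0) at_top) \<and>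
         (\<exists>vbar::'a. norm vbar = ((\<Sum>i<N. m i * \<theta> i 0) / (\<Sum>i<N. m i)) powr (1 / p) \<and>
            (\<exists>C rate. C > 0 \<and> rate > 0 \<and>
               (\<forall>i<N. \<forall>t\<ge>0. norm (v i t - vbar) \<le> C * exp (- rate * t))))"
proof -
  obtain e :: 'a where e: "norm e = 1" "\<forall>i<N. e \<bullet> v i 0 > 0" using sectorial by blast
  interpret csf N m \<sigma> p \<kappa> \<phi> x v \<theta> e
    using N m_pos \<sigma>_pos p_pos \<kappa>_pos kernel phi_star_pos cond sol theta0 e by unfold_locales auto
  have thbeq: "(\<Sum>i<N. m i * \<theta> i 0) / (\<Sum>i<N. m i) = thb" by (simp add: thb_def M_def)
  obtain vbar C g T where V: "T \<ge> 0" "C \<ge> 0" "g > 0" "\<forall>t\<ge>T. norm (v 0 t - vbar) \<le> C * exp (- g * t)"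
    "norm vbar = thb powr (1/p)"
    using v0_conv by blast
  obtain Cv gv where Cv: "Cv \<ge> 0" "gv > 0" "\<forall>i<N. \<forall>j<N. \<forall>t\<ge>0. norm (v i t - v j t) \<le> Cv * exp (- gv * t)"
    using vdiff by blast
  obtain Q where Q: "Q > 0" "\<forall>i<N. \<forall>t\<ge>0. norm (v i t) \<le> Q" using speed_bound by blast
  have N0: "0 < N" using N by simp
  define R where "R = norm vbar"
  have Rpos: "R > 0" using V thb_pos by (simp add: R_def)
  define rate where "rate = min g gv"
  have rate: "rate > 0" using V Cv by (simp add: rate_def)
  define C' where "C' = (Cv + C + Q + R + 1) * exp (rate * T)"
  have C'pos: "C' > 0" using Cv V Q Rpos by (simp add: C'_def add_pos_nonneg)
  have eT: "exp (rate * T) \<ge> 1" using rate V by simp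
  have bound: "norm (v i t - vbar) \<le> C' * exp (- rate * t)" if i: "i < N" and t: "t \<ge> 0" for i t
  proof (cases "t \<ge> T")
    case True
    have e1: "exp (- g * t) \<le> exp (- rate * t)" "exp (- gv * t) \<le> exp (- rate * t)"
      using t by (auto simp: rate_def intro!: exp_mono_rate mult_right_mono)
    have "norm (v i t - vbar) \<le> norm (v i t - v 0 t) + norm (v 0 t - vbar)"
      using norm_triangle_ineq[of "v i t - v 0 t" "v 0 t - vbar"] by simp
    also have "\<dots> \<le> Cv * exp (- rate * t) + C * exp (- rate * t)"
    proof (rule add_mono)
      show "norm (v i t - v 0 t) \<le> Cv * exp (- rate * t)"
        using Cv(3) i N0 t e1 Cv(1) by (meson lessThan_iff mult_left_mono order.trans)
      show "norm (v 0 t - vbar) \<le> C * exp (- rate * t)"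
        using V(4) True e1 V(2) by (meson mult_left_mono order.trans)
    qed
    also have "\<dots> = (Cv + C) * exp (- rate * t)" by (simp add: algebra_simps)
    also have "\<dots> \<le> C' * exp (- rate * t)"
    proof (rule mult_right_mono)
      have "Cv + C \<le> (Cv + C + Q + R + 1) * 1" using Q Rpos by simp
      also have "\<dots> \<le> (Cv + C + Q + R + 1) * exp (rate * T)"
        using eT Cv V Q Rpos by (intro mult_left_mono) auto
      finally show "Cv + C \<le> C'" by (simp add: C'_def)
    qed simp
    finally show ?thesis .
  next
    case False
    have "norm (v i t - vbar) \<le> norm (v i t) + norm vbar" by (rule norm_triangle_ineq4)
    also have "\<dots> \<le> Q + R" using Q i t by (simp add: R_def)
    also have "\<dots> \<le> (Cv + C + Q + R + 1) * 1" using Cv V by simp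
    also have "\<dots> \<le> (Cv + C + Q + R + 1) * exp (rate * (T - t))"
      using False rate Cv V Q Rpos by (intro mult_left_mono) auto
    also have "\<dots> = C' * exp (- rate * t)"
      by (simp add: C'_def mult.assoc exp_add[symmetric] algebra_simps)
    finally show ?thesis .
  qed
  have notzero: "\<not> (\<forall>i<N. (v i \<longlongrightarrow> 0) at_top)"
  proof
    assume "\<forall>i<N. (v i \<longlongrightarrow> 0) at_top"
    then have "(v 0 \<longlongrightarrow> 0) at_top" using N0 by simp
    then have "eventually (\<lambda>t. dist (v 0 t) 0 < R / 2) at_top" using Rpos by (intro tendstoD) auto
    then obtain T1 where T1: "\<forall>t\<ge>T1. norm (v 0 t) < R / 2" by (auto simp: eventually_at_top_linorder)
    obtain T2 where T2: "T2 \<ge> 0" "\<forall>t\<ge>T2. C * exp (- g * t) < R / 2"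
      using ev_small[OF V(2,3), of "R/2"] Rpos by auto
    define t where "t = max T (max T1 T2)"
    have "norm (v 0 t) < R / 2" using T1 by (simp add: t_def)
    moreover have "norm (v 0 t - vbar) < R / 2"
      using V(4) T2 by (smt (verit) t_def max.cobounded1 max.cobounded2 max.coboundedI2)
    moreover have "R \<le> norm (v 0 t) + norm (v 0 t - vbar)"
      using norm_triangle_ineq4[of "v 0 t" "v 0 t - vbar"] by (simp add: R_def)
    ultimately show False by simp
  qed
  show ?thesis
    unfolding thbeq
    using notzero bound V(5) C'pos rate by blast
qed



end
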